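(* Let $A=(A[1],\dots,A[n])$ be an array of $n$ pairwise distinct real numbers and let $G$ be the corresponding graph of $A$ with reach one. Let $F$ be the resulting DFS forest of $G$ (for a visiting list that is some ordering of all vertices). Merge the sub-trees of $F$ and call the resulting graph $H'$. Let $H_1$ and $R_1$ be the graph and the root list produced by the merge step applied to $H'$ with the list of roots of $F$ (in some order), and let $F_1$ be the resulting DFS forest of $H_1$ with visiting list $R_1$. For $i>1$, let $H_i$ and $R_i$ be the graph and root list produced by the merge step applied to $F_{i-1}$ with root list $R_{i-1}$, and let $F_i$ be the resulting DFS forest of $H_i$ with visiting list $R_i$. Then there exists a finite $i$ such that $F_i$ is a directed Hamiltonian path on all $n$ vertices, and the topological sort of $F_i$ is the sequence of indices of the sorted array of $A$.
   Context: An array is a finite sequence $A=(A[1],\dots,A[n])$ of pairwise distinct real numbers. A comparison graph on $A$ is a directed graph with vertex set $\{1,\dots,n\}$ in which every arc $(u,v)$ satisfies $A[u]<A[v]$. The corresponding graph of $A$ with reach $r\ge1$ is the directed graph on $\{1,\dots,n\}$ having an arc $(i,j)$ for every $i\neq j$ with $A[i]<A[j]$ such that $j\equiv i+k$ or $j\equiv i-k \pmod n$ for some $1\le k\le r$ (indices cyclic). Components of a directed graph are the connected components of its underlying undirected graph. A directed Hamiltonian path of a graph (or of a component) is a directed path visiting each of its vertices exactly once. A topological sort of a directed acyclic graph is an ordering of all vertices such that every arc goes from an earlier to a later vertex. The sequence of indices of the sorted array of $A$ is the permutation $(\sigma_1,\dots,\sigma_n)$ of $\{1,\dots,n\}$ with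 $A[\sigma_1]<\dots<A[\sigma_n]$. DFS: adjacency lists are sorted in increasing order of $A$-value; given a visiting list $(l_1,\dots,l_m)$, for $t=1,\dots,m$, if $l_t$ is unvisited call Visit$(l_t)$, where Visit$(u)$ marks $u$ visited and, for each out-neighbour $w$ of $u$ in increasing order of $A[w]$ that is still unvisited, sets parent$(w)=u$ and calls Visit$(w)$. The resulting DFS forest is the directed graph on the same vertex set with arcs $(\mathrm{parent}(w),w)$; its roots are the vertices without parent. Merging the sub-trees of a DFS forest $F$ of the reach-one corresponding graph: for each component of $F$ whose root has exactly two children $a_1,b_1$, set $p=a_1$, $q=b_1$ and, while both $p,q$ are defined: if $A[p]<A[q]$ add the arc $(p,q)$ and replace $p$ by its smallest-valued child in $F$ (undefined if none); otherwise add the arc $(q,p)$ and replace $q$ by its smallest-valued child in $F$ (undefined if none). Component merge of two distinct components $C,D$ of a comparison graph: set $p,q$ to the minimum-valued vertices of $C,D$; while both are defined: if $A[p]<A[q]$ add the arc $(p,q)$ and replace $p$ by the smallest-valued out-neighbour of $p$ in $C$ (ignoring arcs added during this merge; undefined if none); otherwise add $(q,p)$ and replace $q$ analogously within $D$. Merge step: given a comparison graph whose components each have a minimum-valued vertex (its root) and a list $(\rho_1,\dots,\rho_k)$ of these roots, perform the component merge of the components of $\rho_{2j-1}$ and $\rho_{2j}$ for $j=1,\dots,\lfloor k/2\rfloor$, and return the new root list obtained from $(\rho_1,\dots,\rho_k)$ by deleting, from each merged pair, the root of larger value. *)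

theory Defs
  imports Complex_Main
begin

text \<open>Vertices (array indices) are the naturals 1..n; an array is a function
  A :: nat => real that is injective on {1..n}.\<close>

type_synonym graph = "(nat \<times> nat) set"

definition corr_graph :: "nat \<Rightarrow> nat \<Rightarrow> (nat \<Rightarrow> real) \<Rightarrow> graph" where
  "corr_graph n r A = {(i, j). i \<in> {1..n} \<and> j \<in> {1..n} \<and> i \<noteq> j \<and> A i < A j \<and>
      (\<exists>k\<in>{1..r}. j mod n = (i + k) mod n \<or> i mod n = (j + k) mod n)}"

definition by_value :: "nat \<Rightarrow> (nat \<Rightarrow> real) \<Rightarrow> nat list" where
  "by_value n A = sort_key A [1..<Suc n]"

definition out_sorted :: "nat \<Rightarrow> graph \<Rightarrow> (nat \<Rightarrow> real) \<Rightarrow> nat \<Rightarrow> nat list" where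
  "out_sorted n G A u = filter (\<lambda>w. (u, w) \<in> G) (by_value n A)"

definition first_out :: "nat \<Rightarrow> graph \<Rightarrow> (nat \<Rightarrow> real) \<Rightarrow> nat set \<Rightarrow> nat \<Rightarrow> nat option" where
  "first_out n G A S p =
     (case filter (\<lambda>w. (p, w) \<in> G \<and> w \<in> S) (by_value n A) of [] \<Rightarrow> None | w # _ \<Rightarrow> Some w)"

text \<open>The first argument is a
  recursion-depth bound (fuel); it is instantiated with n+1, which is never exhausted
  because every nested call of Visit is on a fresh unvisited vertex of {1..n}.\<close>

type_synonym dfs_state = "nat set \<times> (nat \<Rightarrow> nat option)"

function visit :: "nat \<Rightarrow> nat \<Rightarrow> graph \<Rightarrow> (nat \<Rightarrow> real) \<Rightarrow> nat \<Rightarrow> dfs_state \<Rightarrow> dfs_state"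
  and visit_list :: "nat \<Rightarrow> nat \<Rightarrow> graph \<Rightarrow> (nat \<Rightarrow> real) \<Rightarrow> nat \<Rightarrow> nat list \<Rightarrow> dfs_state \<Rightarrow> dfs_state"
where
  "visit 0 n G A u st = st"
| "visit (Suc k) n G A u (vis, par) = visit_list k n G A u (out_sorted n G A u) (insert u vis, par)"
| "visit_list k n G A u [] st = st"
| "visit_list k n G A u (w # ws) (vis, par) =
     (if w \<in> vis then visit_list k n G A u ws (vis, par)
      else visit_list k n G A u ws (visit k n G A w (vis, par(w := Some u))))"
  by pat_completeness auto
termination
  by (relation "measures [\<lambda>x. case x of Inl (k, _) \<Rightarrow> k | Inr (k, _) \<Rightarrow> k,
                          \<lambda>x. case x of Inl _ \<Rightarrow> 0 | Inr (_, _, _, _, _, ws, _) \<Rightarrow> Suc (length ws)]") auto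

fun dfs_run :: "nat \<Rightarrow> graph \<Rightarrow> (nat \<Rightarrow> real) \<Rightarrow> nat list \<Rightarrow> dfs_state \<Rightarrow> dfs_state" where
  "dfs_run n G A [] st = st"
| "dfs_run n G A (l # ls) (vis, par) =
     (if l \<in> vis then dfs_run n G A ls (vis, par)
      else dfs_run n G A ls (visit (Suc n) n G A l (vis, par)))"

definition dfs_forest :: "nat \<Rightarrow> graph \<Rightarrow> (nat \<Rightarrow> real) \<Rightarrow> nat list \<Rightarrow> graph" where
  "dfs_forest n G A ls = {(u, w). snd (dfs_run n G A ls ({}, \<lambda>_. None)) w = Some u}"

definition roots :: "nat \<Rightarrow> graph \<Rightarrow> nat set" where
  "roots n F = {v \<in> {1..n}. \<forall>u. (u, v) \<notin> F}"

text \<open>zipm k A nx ny p q: the arcs added by the loop "while both p,q defined: if A p < A q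
  add (p,q) and p := nx p, else add (q,p) and q := ny q". The fuel k = 2n+2 is never
  exhausted, since both pointers move along strictly A-increasing chains in {1..n}.\<close>
fun zipm :: "nat \<Rightarrow> (nat \<Rightarrow> real) \<Rightarrow> (nat \<Rightarrow> nat option) \<Rightarrow> (nat \<Rightarrow> nat option)
              \<Rightarrow> nat option \<Rightarrow> nat option \<Rightarrow> graph" where
  "zipm (Suc k) A nx ny (Some p) (Some q) =
     (if A p < A q then insert (p, q) (zipm k A nx ny (nx p) (Some q))
      else insert (q, p) (zipm k A nx ny (Some p) (ny q)))"
| "zipm _ _ _ _ _ _ = {}"

definition merge_subtrees :: "nat \<Rightarrow> (nat \<Rightarrow> real) \<Rightarrow> graph \<Rightarrow> graph" where
  "merge_subtrees n A F = F \<union>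
     \<Union>{zipm (2 * n + 2) A (first_out n F A UNIV) (first_out n F A UNIV) (Some a) (Some b)
        | r a b. r \<in> roots n F \<and> a \<noteq> b \<and> {w. (r, w) \<in> F} = {a, b}}"

definition comp :: "nat \<Rightarrow> graph \<Rightarrow> nat \<Rightarrow> nat set" where
  "comp n G x = {y \<in> {1..n}. (x, y) \<in> (G \<union> G\<inverse>)\<^sup>*}"

definition comp_merge :: "nat \<Rightarrow> (nat \<Rightarrow> real) \<Rightarrow> graph \<Rightarrow> nat \<Rightarrow> nat \<Rightarrow> graph" where
  "comp_merge n A G x y =
     (let C = comp n G x; D = comp n G y in
      zipm (2 * n + 2) A (first_out n G A C) (first_out n G A D)
        (Some (arg_min_on A C)) (Some (arg_min_on A D)))"

fun mstep_arcs :: "nat \<Rightarrow> (nat \<Rightarrow> real) \<Rightarrow> graph \<Rightarrow> nat list \<Rightarrow> graph" where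
  "mstep_arcs n A G (a # b # rest) = comp_merge n A G a b \<union> mstep_arcs n A G rest"
| "mstep_arcs n A G _ = {}"

fun mstep_roots :: "(nat \<Rightarrow> real) \<Rightarrow> nat list \<Rightarrow> nat list" where
  "mstep_roots A (a # b # rest) = (if A a < A b then a else b) # mstep_roots A rest"
| "mstep_roots A xs = xs"

definition merge_step :: "nat \<Rightarrow> (nat \<Rightarrow> real) \<Rightarrow> graph \<Rightarrow> nat list \<Rightarrow> graph \<times> nat list" where
  "merge_step n A G R = (G \<union> mstep_arcs n A G R, mstep_roots A R)"

text \<open>One round: (F_{i-1}, R_{i-1}) to (F_i, R_i), with H_i the merged graph.\<close>
definition round_step :: "nat \<Rightarrow> (nat \<Rightarrow> real) \<Rightarrow> graph \<times> nat list \<Rightarrow> graph \<times> nat list" where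
  "round_step n A FR = (let (H, R) = merge_step n A (fst FR) (snd FR) in (dfs_forest n H A R, R))"

definition is_ham_path_graph :: "nat \<Rightarrow> graph \<Rightarrow> bool" where
  "is_ham_path_graph n G \<longleftrightarrow>
     (\<exists>p. distinct p \<and> set p = {1..n} \<and> G = set (zip p (tl p)))"

definition is_topsort :: "nat \<Rightarrow> graph \<Rightarrow> nat list \<Rightarrow> bool" where
  "is_topsort n G ord \<longleftrightarrow> distinct ord \<and> set ord = {1..n} \<and>
     (\<forall>(u, v) \<in> G. \<exists>i j. i < j \<and> j < length ord \<and> ord ! i = u \<and> ord ! j = v)"

definition is_sorted_indices :: "nat \<Rightarrow> (nat \<Rightarrow> real) \<Rightarrow> nat list \<Rightarrow> bool" where
  "is_sorted_indices n A \<sigma> \<longleftrightarrow> distinct \<sigma> \<and> set \<sigma> = {1..n} \<and> sorted_wrt (\<lambda>i j. A i < A j) \<sigma>"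

end

theory Submission
  imports Defs "HOL-Library.Multiset"
begin

lemma consec:
  fixes A :: "nat \<Rightarrow> real"
  assumes "sorted_wrt (\<lambda>x y. A x < A y) L"
  shows "(x,y) \<in> set (zip L (tl L)) \<longleftrightarrow> x \<in> set L \<and> y \<in> set L \<and> A x < A y \<and>
     \<not>(\<exists>z\<in>set L. A x < A z \<and> A z < A y)"
  using assms
proof (induction L)
  case Nil then show ?case by simp
next
  case (Cons a L)
  show ?case
  proof (cases L)
    case Nil then show ?thesis by auto
  next
    case (Cons b L')
    have eq: "set (zip (a # L) (tl (a # L))) = insert (a,b) (set (zip L (tl L)))"
      using Cons by simp
    have IH: "(x,y) \<in> set (zip L (tl L)) \<longleftrightarrow> x \<in> set L \<and> y \<in> set L \<and> A x < A y \<and>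
     \<not>(\<exists>z\<in>set L. A x < A z \<and> A z < A y)" using Cons.IH Cons.prems by simp
    have s: "\<forall>z\<in>set L. A a < A z" using Cons.prems by simp
    have sb: "\<forall>z\<in>set L'. A b < A z" using Cons.prems Cons by simp
    have "x \<in> set L \<and> y \<in> set L \<and> A x < A y \<and> \<not>(\<exists>z\<in>set L. A x < A z \<and> A z < A y)
      \<longleftrightarrow> x \<in> set L \<and> y \<in> set L \<and> A x < A y \<and> \<not>(\<exists>z\<in>set (a#L). A x < A z \<and> A z < A y)"
      using s by auto
    moreover have "(x,y) = (a,b) \<longleftrightarrow> x = a \<and> y \<in> set (a#L) \<and> A x < A y \<and> \<not>(\<exists>z\<in>set (a#L). A x < A z \<and> A z < A y)"
      using s sb Cons by (auto simp: not_less)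
    moreover have "x \<in> set (a#L) \<and> x \<noteq> a \<longleftrightarrow> x \<in> set L \<and> x \<noteq> a" by auto
    moreover have "x \<in> set L \<Longrightarrow> x \<noteq> a" using s by auto
    moreover have "y \<in> set (a#L) \<and> A x < A y \<and> x \<in> set L \<longleftrightarrow> y \<in> set L \<and> A x < A y \<and> x \<in> set L" using s by auto
    moreover have "x \<in> set (a#L) \<longleftrightarrow> x = a \<or> x \<in> set L" by auto
    ultimately show ?thesis unfolding eq IH insert_iff by blast
  qed
qed

lemma hd_min:
  fixes A :: "nat \<Rightarrow> real"
  assumes "sorted_wrt (\<lambda>x y. A x < A y) L" "x \<in> set L" "\<forall>y\<in>set L. A x \<le> A y"
  shows "hd L = x"
proof (cases L)
  case (Cons a L')
  then show ?thesis using assms by (cases "x = a") force+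
qed (use assms in auto)

lemma filter_hd:
  fixes A :: "nat \<Rightarrow> real"
  assumes "sorted (map A xs)" "w \<in> set xs" "P w" "\<forall>w'\<in>set xs. P w' \<longrightarrow> A w \<le> A w'"
    "inj_on A (set xs)"
  shows "\<exists>rest. filter P xs = w # rest"
proof -
  have so: "sorted (map A (filter P xs))" using assms(1) by (simp add: sorted_filter)
  have "w \<in> set (filter P xs)" using assms by simp
  then obtain y rest where y: "filter P xs = y # rest" by (cases "filter P xs") auto
  have "A y \<le> A w" using so y \<open>w \<in> set (filter P xs)\<close> by auto
  moreover have "A w \<le> A y" using assms(4) y by (metis filter_eq_ConsD in_set_conv_decomp)
  moreover have "y \<in> set xs" using y by (metis filter_eq_ConsD in_set_conv_decomp)
  ultimately have "y = w" using assms(2,5) by (meson antisym inj_on_def)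
  then show ?thesis using y by blast
qed

lemma by_value_props:
  "set (by_value n A) = {1..n}" "distinct (by_value n A)" "sorted (map A (by_value n A))"
  unfolding by_value_def by auto

lemma sorted_strict:
  fixes A :: "nat \<Rightarrow> real"
  assumes "sorted (map A xs)" "distinct xs" "inj_on A (set xs)"
  shows "sorted_wrt (\<lambda>x y. A x < A y) xs"
proof -
  have "sorted_wrt (\<lambda>x y. A x \<le> A y) xs" using assms(1) by (simp add: sorted_wrt_map)
  then show ?thesis unfolding sorted_wrt_iff_nth_less
  proof (intro allI impI)
    fix i j assume h: "\<forall>i j. i < j \<longrightarrow> j < length xs \<longrightarrow> A (xs ! i) \<le> A (xs ! j)" "i < j" "j < length xs"
    then have "xs ! i \<noteq> xs ! j" using assms(2) by (simp add: nth_eq_iff_index_eq)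
    then have "A (xs ! i) \<noteq> A (xs ! j)" using assms(3) h by (meson inj_on_contraD nth_mem order.strict_trans)
    then show "A (xs ! i) < A (xs ! j)" using h by force
  qed
qed

lemma first_out_some:
  assumes "inj_on A {1..n}" "w \<in> {1..n}" "(p,w) \<in> G" "w \<in> S"
    "\<forall>w'\<in>{1..n}. (p,w') \<in> G \<and> w' \<in> S \<longrightarrow> A w \<le> A w'"
  shows "first_out n G A S p = Some w"
proof -
  obtain rest where "filter (\<lambda>w. (p, w) \<in> G \<and> w \<in> S) (by_value n A) = w # rest"
    using filter_hd[of A "by_value n A" w "\<lambda>w. (p, w) \<in> G \<and> w \<in> S"] assms by_value_props
    by auto
  then show ?thesis unfolding first_out_def by simp
qed

lemma first_out_none:
  assumes "\<forall>w'\<in>{1..n}. \<not>((p,w') \<in> G \<and> w' \<in> S)"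
  shows "first_out n G A S p = None"
proof -
  have "filter (\<lambda>w. (p, w) \<in> G \<and> w \<in> S) (by_value n A) = []"
    using assms by_value_props(1) by (auto simp: filter_empty_conv)
  then show ?thesis unfolding first_out_def by simp
qed

lemma zipm_None[simp]: "zipm k A nx ny None q = {}" "zipm k A nx ny p None = {}" "zipm 0 A nx ny p q = {}"
  by (cases k; cases p; cases q; simp)+

lemma zip_tl_sub: "set (zip L (tl L)) \<subseteq> set (zip (a # L) L)"
  by (cases L) auto

lemma zipm_lem:
  fixes A :: "nat \<Rightarrow> real"
  assumes "sorted_wrt (\<lambda>x y. A x < A y) xs" "sorted_wrt (\<lambda>x y. A x < A y) ys" "xs \<noteq> []" "ys \<noteq> []"
   "set xs \<inter> set ys = {}" "inj_on A (set xs \<union> set ys)"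
   "\<forall>x y. (x,y) \<in> set (zip xs (tl xs)) \<longrightarrow> nx x = Some y" "nx (last xs) = None"
   "\<forall>x y. (x,y) \<in> set (zip ys (tl ys)) \<longrightarrow> ny x = Some y" "ny (last ys) = None"
   "length xs + length ys \<le> k"
  shows "zipm k A nx ny (Some (hd xs)) (Some (hd ys)) \<subseteq>
            {(u,v). u \<in> set xs \<union> set ys \<and> v \<in> set xs \<union> set ys \<and> A u < A v}
   \<and> (\<forall>u v. ((u \<in> set xs \<and> v \<in> set ys) \<or> (u \<in> set ys \<and> v \<in> set xs)) \<and> A u < A v \<and>
         \<not>(\<exists>z\<in>set xs \<union> set ys. A u < A z \<and> A z < A v)
        \<longrightarrow> (u,v) \<in> zipm k A nx ny (Some (hd xs)) (Some (hd ys)))"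
  using assms
proof (induction k arbitrary: xs ys)
  case 0
  then show ?case by (cases xs) auto
next
  case (Suc k)
  obtain p xs' where xs: "xs = p # xs'" using Suc.prems(3) by (cases xs) auto
  obtain q ys' where ys: "ys = q # ys'" using Suc.prems(4) by (cases ys) auto
  have pq: "A p \<noteq> A q" using Suc.prems(5,6) xs ys by (auto dest: inj_onD)
  have pmin: "\<forall>y\<in>set xs'. A p < A y" using Suc.prems(1) xs by simp
  have qmin: "\<forall>y\<in>set ys'. A q < A y" using Suc.prems(2) ys by simp
  show ?case
  proof (cases "A p < A q")
    case lt: True
    have Z: "zipm (Suc k) A nx ny (Some (hd xs)) (Some (hd ys)) = insert (p,q) (zipm k A nx ny (nx p) (Some q))"
      using lt xs ys by simp
    show ?thesis
    proof (cases "xs' = []")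
      case True
      have "nx p = None" using Suc.prems(8) xs True by simp
      then have Z1: "zipm (Suc k) A nx ny (Some (hd xs)) (Some (hd ys)) = {(p,q)}" using Z by simp
      show ?thesis unfolding Z1 using lt xs ys True qmin by auto
    next
      case False
      obtain b r where xs': "xs' = b # r" using False by (cases xs') auto
      have nxp: "nx p = Some (hd xs')" using Suc.prems(7) xs xs' by simp
      have IH: "zipm k A nx ny (Some (hd xs')) (Some (hd ys)) \<subseteq>
            {(u,v). u \<in> set xs' \<union> set ys \<and> v \<in> set xs' \<union> set ys \<and> A u < A v}
        \<and> (\<forall>u v. ((u \<in> set xs' \<and> v \<in> set ys) \<or> (u \<in> set ys \<and> v \<in> set xs')) \<and> A u < A v \<and>
         \<not>(\<exists>z\<in>set xs' \<union> set ys. A u < A z \<and> A z < A v)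
        \<longrightarrow> (u,v) \<in> zipm k A nx ny (Some (hd xs')) (Some (hd ys)))"
      proof (rule Suc.IH)
        show "sorted_wrt (\<lambda>x y. A x < A y) xs'" using Suc.prems(1) xs by simp
        show "set xs' \<inter> set ys = {}" using Suc.prems(5) xs by auto
        show "inj_on A (set xs' \<union> set ys)" using Suc.prems(6) xs by (auto intro: inj_on_subset)
        show "\<forall>x y. (x, y) \<in> set (zip xs' (tl xs')) \<longrightarrow> nx x = Some y"
          using Suc.prems(7) xs zip_tl_sub[of xs' p] by auto
        show "nx (last xs') = None" using Suc.prems(8) xs False by simp
        show "length xs' + length ys \<le> k" using Suc.prems(11) xs by simp
      qed (use Suc.prems False in auto)
      have Z2: "zipm (Suc k) A nx ny (Some (hd xs)) (Some (hd ys)) =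
         insert (p,q) (zipm k A nx ny (Some (hd xs')) (Some (hd ys)))" using Z nxp ys by simp
      show ?thesis unfolding Z2
      proof (intro conjI allI impI)
        show "insert (p, q) (zipm k A nx ny (Some (hd xs')) (Some (hd ys)))
          \<subseteq> {(u, v). u \<in> set xs \<union> set ys \<and> v \<in> set xs \<union> set ys \<and> A u < A v}"
          using IH lt xs ys by auto
      next
        fix u v
        assume h: "(u \<in> set xs \<and> v \<in> set ys \<or> u \<in> set ys \<and> v \<in> set xs) \<and> A u < A v \<and>
           \<not> (\<exists>z\<in>set xs \<union> set ys. A u < A z \<and> A z < A v)"
        show "(u, v) \<in> insert (p, q) (zipm k A nx ny (Some (hd xs')) (Some (hd ys)))"
        proof (cases "u = p")
          case True
          then have "v \<in> set ys" using h Suc.prems(5) xs by auto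
          then have "v = q" using h True qmin ys lt by auto
          then show ?thesis using True by simp
        next
          case False
          have "u \<in> set xs' \<and> v \<in> set ys \<or> u \<in> set ys \<and> v \<in> set xs'"
          proof (cases "u \<in> set xs")
            case True then show ?thesis using False h xs Suc.prems(5) by auto
          next
            case u: False
            then have "u \<in> set ys" "v \<in> set xs" using h by auto
            moreover have "A q \<le> A u" using \<open>u \<in> set ys\<close> qmin ys by (auto simp: less_imp_le)
            ultimately have "v \<noteq> p" using h lt by auto
            then show ?thesis using \<open>u \<in> set ys\<close> \<open>v \<in> set xs\<close> xs by auto
          qed
          moreover have "\<not> (\<exists>z\<in>set xs' \<union> set ys. A u < A z \<and> A z < A v)" using h xs by auto
          ultimately show ?thesis using IH h by blast
        qed
      qed
    qed
  next
    case ge: False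
    then have lt: "A q < A p" using pq by simp
    have Z: "zipm (Suc k) A nx ny (Some (hd xs)) (Some (hd ys)) = insert (q,p) (zipm k A nx ny (Some p) (ny q))"
      using ge xs ys by simp
    show ?thesis
    proof (cases "ys' = []")
      case True
      have "ny q = None" using Suc.prems(10) ys True by simp
      then have Z1: "zipm (Suc k) A nx ny (Some (hd xs)) (Some (hd ys)) = {(q,p)}" using Z by simp
      show ?thesis unfolding Z1 using lt xs ys True pmin by auto
    next
      case False
      obtain b r where ys': "ys' = b # r" using False by (cases ys') auto
      have nyq: "ny q = Some (hd ys')" using Suc.prems(9) ys ys' by simp
      have IH: "zipm k A nx ny (Some (hd xs)) (Some (hd ys')) \<subseteq>
            {(u,v). u \<in> set xs \<union> set ys' \<and> v \<in> set xs \<union> set ys' \<and> A u < A v}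
        \<and> (\<forall>u v. ((u \<in> set xs \<and> v \<in> set ys') \<or> (u \<in> set ys' \<and> v \<in> set xs)) \<and> A u < A v \<and>
         \<not>(\<exists>z\<in>set xs \<union> set ys'. A u < A z \<and> A z < A v)
        \<longrightarrow> (u,v) \<in> zipm k A nx ny (Some (hd xs)) (Some (hd ys')))"
      proof (rule Suc.IH)
        show "sorted_wrt (\<lambda>x y. A x < A y) ys'" using Suc.prems(2) ys by simp
        show "set xs \<inter> set ys' = {}" using Suc.prems(5) ys by auto
        show "inj_on A (set xs \<union> set ys')" using Suc.prems(6) ys by (auto intro: inj_on_subset)
        show "\<forall>x y. (x, y) \<in> set (zip ys' (tl ys')) \<longrightarrow> ny x = Some y"
          using Suc.prems(9) ys zip_tl_sub[of ys' q] by auto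
        show "ny (last ys') = None" using Suc.prems(10) ys False by simp
        show "length xs + length ys' \<le> k" using Suc.prems(11) ys by simp
      qed (use Suc.prems False in auto)
      have Z2: "zipm (Suc k) A nx ny (Some (hd xs)) (Some (hd ys)) =
         insert (q,p) (zipm k A nx ny (Some (hd xs)) (Some (hd ys')))" using Z nyq xs by simp
      show ?thesis unfolding Z2
      proof (intro conjI allI impI)
        show "insert (q, p) (zipm k A nx ny (Some (hd xs)) (Some (hd ys')))
          \<subseteq> {(u, v). u \<in> set xs \<union> set ys \<and> v \<in> set xs \<union> set ys \<and> A u < A v}"
          using IH lt xs ys by auto
      next
        fix u v
        assume h: "(u \<in> set xs \<and> v \<in> set ys \<or> u \<in> set ys \<and> v \<in> set xs) \<and> A u < A v \<and>
           \<not> (\<exists>z\<in>set xs \<union> set ys. A u < A z \<and> A z < A v)"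
        show "(u, v) \<in> insert (q, p) (zipm k A nx ny (Some (hd xs)) (Some (hd ys')))"
        proof (cases "u = q")
          case True
          then have "v \<in> set xs" using h Suc.prems(5) ys by auto
          then have "v = p" using h True pmin xs lt by auto
          then show ?thesis using True by simp
        next
          case False
          have "u \<in> set xs \<and> v \<in> set ys' \<or> u \<in> set ys' \<and> v \<in> set xs"
          proof (cases "u \<in> set ys")
            case True then show ?thesis using False h ys Suc.prems(5) by auto
          next
            case u: False
            then have "u \<in> set xs" "v \<in> set ys" using h by auto
            moreover have "A p \<le> A u" using \<open>u \<in> set xs\<close> pmin xs by (auto simp: less_imp_le)
            ultimately have "v \<noteq> q" using h lt by auto
            then show ?thesis using \<open>u \<in> set xs\<close> \<open>v \<in> set ys\<close> ys by auto
          qed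
          moreover have "\<not> (\<exists>z\<in>set xs \<union> set ys'. A u < A z \<and> A z < A v)" using h ys by auto
          ultimately show ?thesis using IH h by blast
        qed
      qed
    qed
  qed
qed

fun chain_par :: "nat list \<Rightarrow> (nat \<Rightarrow> nat option) \<Rightarrow> (nat \<Rightarrow> nat option)" where
  "chain_par (x # y # rest) par = chain_par (y # rest) (par(y := Some x))"
| "chain_par _ par = par"

definition chains :: "nat list list \<Rightarrow> graph" where
  "chains Ms = (\<Union>L\<in>set Ms. set (zip L (tl L)))"

lemma visit_list_vis: "set ws \<subseteq> fst st \<Longrightarrow> visit_list k n H A u ws st = st"
proof (induction ws arbitrary: st)
  case Nil then show ?case by simp
next
  case (Cons a ws)
  obtain vis par where st: "st = (vis, par)" by fastforce
  show ?case using Cons st by simp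
qed

lemma visit_chain:
  fixes A :: "nat \<Rightarrow> real"
  assumes inj: "inj_on A {1..n}" and inc: "\<forall>(x,w)\<in>H. A x < A w"
  shows "sorted_wrt (\<lambda>x y. A x < A y) L \<Longrightarrow> L \<noteq> [] \<Longrightarrow> set L \<subseteq> {1..n} \<Longrightarrow>
    \<forall>x\<in>set L. \<forall>w\<in>{1..n}. (x,w)\<in>H \<longrightarrow> w \<in> set L \<Longrightarrow>
    set (zip L (tl L)) \<subseteq> H \<Longrightarrow> set L \<inter> vis = {} \<Longrightarrow> length L \<le> k \<Longrightarrow>
    visit k n H A (hd L) (vis,par) = (vis \<union> set L, chain_par L par)"
proof (induction L arbitrary: vis par k)
  case Nil then show ?case by simp
next
  case (Cons v L')
  obtain k' where k: "k = Suc k'" using Cons.prems(7) by (cases k) auto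
  have vis1: "visit k n H A (hd (v # L')) (vis,par) =
      visit_list k' n H A v (out_sorted n H A v) (insert v vis, par)" using k by simp
  show ?case
  proof (cases L')
    case Nil
    have "out_sorted n H A v = []"
    proof -
      have "\<forall>w\<in>{1..n}. (v,w) \<notin> H" using Cons.prems(4) Nil inc by fastforce
      then show ?thesis unfolding out_sorted_def using by_value_props(1)[where n=n and A=A]
        by (auto simp: filter_empty_conv)
    qed
    then show ?thesis using vis1 Nil by simp
  next
    case (Cons s L'')
    have sv: "(v,s) \<in> H" using Cons.prems(5) Cons by auto
    have sV: "s \<in> {1..n}" using Cons.prems(3) Cons by auto
    have mins: "\<forall>w'\<in>{1..n}. (v,w') \<in> H \<longrightarrow> A s \<le> A w'"
    proof (intro ballI impI)
      fix w' assume w': "w' \<in> {1..n}" "(v,w') \<in> H"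
      then have "w' \<in> set (v # L')" using Cons.prems(4) by auto
      moreover have "A v < A w'" using inc w' by auto
      ultimately have "w' \<in> set L'" by auto
      then show "A s \<le> A w'" using Cons.prems(1) Cons by (auto simp: less_imp_le)
    qed
    obtain rest where os: "out_sorted n H A v = s # rest"
      unfolding out_sorted_def
      using filter_hd[of A "by_value n A" s "\<lambda>w. (v,w) \<in> H"] by_value_props[where n=n and A=A] sv sV mins
        inj by auto
    have restL: "set rest \<subseteq> set (v # L')"
    proof
      fix w assume "w \<in> set rest"
      then have "w \<in> set (out_sorted n H A v)" using os by simp
      then have "w \<in> {1..n}" "(v,w) \<in> H" unfolding out_sorted_def using by_value_props(1)[where n=n and A=A] by auto
      then show "w \<in> set (v # L')" using Cons.prems(4) by auto
    qed
    have svis: "s \<notin> insert v vis" using Cons.prems(1,6) Cons by auto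
    have IH: "visit k' n H A (hd L') (insert v vis, par(s := Some v)) =
        (insert v vis \<union> set L', chain_par L' (par(s := Some v)))"
    proof (rule Cons.IH)
      show "sorted_wrt (\<lambda>x y. A x < A y) L'" using Cons.prems(1) by simp
      show "L' \<noteq> []" using Cons by simp
      show "set L' \<subseteq> {1..n}" using Cons.prems(3) by simp
      show "\<forall>x\<in>set L'. \<forall>w\<in>{1..n}. (x, w) \<in> H \<longrightarrow> w \<in> set L'"
      proof (intro ballI impI)
        fix x w assume h: "x \<in> set L'" "w \<in> {1..n}" "(x,w) \<in> H"
        then have "w \<in> set (v # L')" using Cons.prems(4) by auto
        moreover have "A v < A x" using Cons.prems(1) h by auto
        moreover have "A x < A w" using inc h by auto
        ultimately show "w \<in> set L'" by auto
      qed
      show "set (zip L' (tl L')) \<subseteq> H" using Cons.prems(5) by (cases L') auto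
      show "set L' \<inter> insert v vis = {}" using Cons.prems(1,6) by auto
      show "length L' \<le> k'" using Cons.prems(7) k by simp
    qed
    have "visit k n H A (hd (v # L')) (vis,par) =
       visit_list k' n H A v rest (insert v vis \<union> set L', chain_par L' (par(s := Some v)))"
      using vis1 os svis IH Cons by simp
    also have "\<dots> = (insert v vis \<union> set L', chain_par L' (par(s := Some v)))"
      by (rule visit_list_vis) (use restL in auto)
    finally show ?thesis using Cons by (simp add: insert_commute)
  qed
qed

lemma chain_par_char:
  "distinct L \<Longrightarrow> chain_par L par w = Some u \<longleftrightarrow>
     (u,w) \<in> set (zip L (tl L)) \<or> (w \<notin> set (tl L) \<and> par w = Some u)"
proof (induction L par rule: chain_par.induct)
  case (1 x y rest par)
  have d: "distinct (y # rest)" using "1.prems" by simp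
  have IH: "chain_par (x#y#rest) par w = Some u \<longleftrightarrow> (u,w)\<in>set(zip (y#rest) rest) \<or> (w \<notin> set rest \<and> (par(y\<mapsto>x)) w = Some u)"
    using "1.IH"[OF d] by (simp only: chain_par.simps list.sel(3))
  have yr: "y \<notin> set rest" using "1.prems" by simp
  show ?case
  proof (cases "w = y")
    case True
    have "(u,y) \<notin> set (zip (y#rest) rest)" using yr by (auto dest: set_zip_rightD)
    then show ?thesis unfolding IH using True yr by auto
  next
    case False
    then show ?thesis unfolding IH by simp
  qed
qed auto

lemma fold_chain_par:
  "distinct (concat Ms) \<Longrightarrow> (\<forall>w\<in>set (concat Ms). par w = None) \<Longrightarrow>
   {(u,w). foldl (\<lambda>p L. chain_par L p) par Ms w = Some u} = {(u,w). par w = Some u} \<union> chains Ms"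
proof (induction Ms arbitrary: par)
  case Nil then show ?case by (simp add: chains_def)
next
  case (Cons L Ms)
  have dL: "distinct L" using Cons.prems by simp
  have "\<forall>w\<in>set (concat Ms). chain_par L par w = None"
  proof
    fix w assume w: "w \<in> set (concat Ms)"
    then have "w \<notin> set L" using Cons.prems(1) by auto
    then have "w \<notin> set (tl L)" by (cases L) auto
    then show "chain_par L par w = None"
      using chain_par_char[OF dL, of par w] \<open>w \<notin> set L\<close> Cons.prems(2) w
      by (cases "chain_par L par w") (auto dest: set_zip_rightD)
  qed
  then have IH: "{(u,w). foldl (\<lambda>p L. chain_par L p) (chain_par L par) Ms w = Some u} =
      {(u,w). chain_par L par w = Some u} \<union> chains Ms" using Cons by simp
  have "{(u,w). chain_par L par w = Some u} = set (zip L (tl L)) \<union> {(u,w). par w = Some u}"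
  proof -
    have "\<forall>w\<in>set (tl L). par w = None" using Cons.prems(2) by (cases L) auto
    then show ?thesis using chain_par_char[OF dL, of par] by auto
  qed
  then show ?case using IH by (auto simp: chains_def)
qed

lemma dfs_run_chain:
  fixes A :: "nat \<Rightarrow> real"
  assumes inj: "inj_on A {1..n}" and inc: "\<forall>(x,w)\<in>H. A x < A w"
  shows "\<forall>L\<in>set Ms. sorted_wrt (\<lambda>x y. A x < A y) L \<and> L \<noteq> [] \<and> set L \<subseteq> {1..n} \<and>
        (\<forall>x\<in>set L. \<forall>w\<in>{1..n}. (x,w)\<in>H \<longrightarrow> w \<in> set L) \<and> set (zip L (tl L)) \<subseteq> H \<Longrightarrow>
    distinct (concat Ms) \<Longrightarrow> set (concat Ms) \<inter> vis = {} \<Longrightarrow>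
    dfs_run n H A (map hd Ms) (vis,par) = (vis \<union> set (concat Ms), foldl (\<lambda>p L. chain_par L p) par Ms)"
proof (induction Ms arbitrary: vis par)
  case Nil then show ?case by simp
next
  case (Cons L Ms)
  have LL: "sorted_wrt (\<lambda>x y. A x < A y) L" "L \<noteq> []" "set L \<subseteq> {1..n}"
        "\<forall>x\<in>set L. \<forall>w\<in>{1..n}. (x,w)\<in>H \<longrightarrow> w \<in> set L" "set (zip L (tl L)) \<subseteq> H"
    using Cons.prems(1) by auto
  have hv: "hd L \<notin> vis" using Cons.prems(3) LL(2) by (cases L) auto
  have len: "length L \<le> Suc n"
  proof -
    have "distinct L" using Cons.prems(2) by simp
    then have "length L = card (set L)" by (simp add: distinct_card)
    also have "\<dots> \<le> card {1..n}" using LL(3) by (intro card_mono) auto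
    finally show ?thesis by simp
  qed
  have V: "visit (Suc n) n H A (hd L) (vis, par) = (vis \<union> set L, chain_par L par)"
    by (rule visit_chain[OF inj inc LL]) (use Cons.prems(3) len in auto)
  have "dfs_run n H A (map hd (L # Ms)) (vis, par) = dfs_run n H A (map hd Ms) (vis \<union> set L, chain_par L par)"
    using hv V by simp
  also have "\<dots> = (vis \<union> set L \<union> set (concat Ms), foldl (\<lambda>p L. chain_par L p) (chain_par L par) Ms)"
  proof (rule Cons.IH)
    show "\<forall>L\<in>set Ms. sorted_wrt (\<lambda>x y. A x < A y) L \<and> L \<noteq> [] \<and> set L \<subseteq> {1..n} \<and>
        (\<forall>x\<in>set L. \<forall>w\<in>{1..n}. (x,w)\<in>H \<longrightarrow> w \<in> set L) \<and> set (zip L (tl L)) \<subseteq> H"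
      using Cons.prems(1) by (simp only: list.set ball_simps) (rule conjunct2)
    show "distinct (concat Ms)" using Cons.prems(2) by simp
    show "set (concat Ms) \<inter> (vis \<union> set L) = {}" using Cons.prems(2,3) by auto
  qed
  finally show ?case by (simp add: Un_assoc)
qed

lemma dfs_forest_chains:
  fixes A :: "nat \<Rightarrow> real"
  assumes inj: "inj_on A {1..n}" and inc: "\<forall>(x,w)\<in>H. A x < A w"
    and "\<forall>L\<in>set Ms. sorted_wrt (\<lambda>x y. A x < A y) L \<and> L \<noteq> [] \<and> set L \<subseteq> {1..n} \<and>
        (\<forall>x\<in>set L. \<forall>w\<in>{1..n}. (x,w)\<in>H \<longrightarrow> w \<in> set L) \<and> set (zip L (tl L)) \<subseteq> H"
    and "distinct (concat Ms)"
  shows "dfs_forest n H A (map hd Ms) = chains Ms"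
proof -
  have "dfs_run n H A (map hd Ms) ({}, \<lambda>_. None) = ({} \<union> set (concat Ms), foldl (\<lambda>p L. chain_par L p) (\<lambda>_. None) Ms)"
    using dfs_run_chain[OF inj inc assms(3,4)] by simp
  then show ?thesis unfolding dfs_forest_def using fold_chain_par[OF assms(4), of "\<lambda>_. None"] by simp
qed

definition wfb :: "nat \<Rightarrow> (nat \<Rightarrow> real) \<Rightarrow> nat list list \<Rightarrow> bool" where
  "wfb n A Ls \<longleftrightarrow> (\<forall>L\<in>set Ls. L \<noteq> [] \<and> sorted_wrt (\<lambda>x y. A x < A y) L) \<and>
     distinct (concat Ls) \<and> set (concat Ls) = {1..n}"

definition good :: "(nat \<Rightarrow> real) \<Rightarrow> graph \<Rightarrow> nat list list \<Rightarrow> bool" where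
  "good A G Ls \<longleftrightarrow> (\<forall>(u,w)\<in>G. \<exists>L\<in>set Ls. u \<in> set L \<and> w \<in> set L \<and> A u < A w) \<and>
     (\<forall>L\<in>set Ls. set (zip L (tl L)) \<subseteq> G)"

fun pm :: "(nat \<Rightarrow> real) \<Rightarrow> nat list list \<Rightarrow> nat list list" where
  "pm A (a # b # rest) = sort_key A (a @ b) # pm A rest"
| "pm A xs = xs"

lemma block_unique:
  "distinct (concat Ls) \<Longrightarrow> L1 \<in> set Ls \<Longrightarrow> L2 \<in> set Ls \<Longrightarrow> y \<in> set L1 \<Longrightarrow> y \<in> set L2 \<Longrightarrow> L1 = L2"
  by (induction Ls) auto

lemma hd_le:
  fixes A :: "nat \<Rightarrow> real"
  shows "sorted_wrt (\<lambda>x y. A x < A y) L \<Longrightarrow> y \<in> set L \<Longrightarrow> A (hd L) \<le> A y"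
  by (cases L) (auto simp: less_imp_le)

lemma connected_chain:
  "set (zip L (tl L)) \<subseteq> E \<Longrightarrow> y \<in> set L \<Longrightarrow> (hd L, y) \<in> E\<^sup>*"
proof (induction L)
  case Nil then show ?case by simp
next
  case (Cons a L)
  show ?case
  proof (cases "y = a")
    case True then show ?thesis by simp
  next
    case False
    then have yL: "y \<in> set L" "L \<noteq> []" using Cons.prems by auto
    have "set (zip L (tl L)) \<subseteq> E" using Cons.prems(1) zip_tl_sub[of L a] by auto
    then have "(hd L, y) \<in> E\<^sup>*" using Cons.IH yL by simp
    moreover have "(a, hd L) \<in> E" using Cons.prems(1) yL(2) by (cases L) auto
    ultimately show ?thesis by simp
  qed
qed

lemma comp_block:
  assumes "wfb n A Ls" "good A G Ls" "L \<in> set Ls" "x \<in> set L"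
  shows "comp n G x = set L"
proof
  show "comp n G x \<subseteq> set L"
  proof
    fix y assume "y \<in> comp n G x"
    then have "(x,y) \<in> (G \<union> G\<inverse>)\<^sup>*" unfolding comp_def by simp
    then show "y \<in> set L"
    proof (induction rule: rtrancl_induct)
      case base then show ?case using assms(4) .
    next
      case (step y z)
      from step.hyps(2) obtain M where M: "M \<in> set Ls" "y \<in> set M" "z \<in> set M"
        using assms(2) unfolding good_def by blast
      then have "M = L" using block_unique[of Ls M L y] assms(1,3) step.IH unfolding wfb_def by blast
      then show ?case using M by simp
    qed
  qed
next
  show "set L \<subseteq> comp n G x"
  proof
    fix y assume y: "y \<in> set L"
    have sub: "set (zip L (tl L)) \<subseteq> G \<union> G\<inverse>" using assms(2,3) unfolding good_def by auto
    have "(hd L, x) \<in> (G \<union> G\<inverse>)\<^sup>*" using connected_chain[OF sub assms(4)] .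
    then have "(x, hd L) \<in> ((G \<union> G\<inverse>)\<inverse>)\<^sup>*" by (simp add: rtrancl_converseI)
    also have "(G \<union> G\<inverse>)\<inverse> = G \<union> G\<inverse>" by auto
    finally have "(x, hd L) \<in> (G \<union> G\<inverse>)\<^sup>*" .
    moreover have "(hd L, y) \<in> (G \<union> G\<inverse>)\<^sup>*" using connected_chain[OF sub y] .
    ultimately have "(x,y) \<in> (G \<union> G\<inverse>)\<^sup>*" by simp
    moreover have "y \<in> {1..n}" using y assms(1,3) unfolding wfb_def by auto
    ultimately show "y \<in> comp n G x" unfolding comp_def by simp
  qed
qed

lemma argmin_block:
  fixes A :: "nat \<Rightarrow> real"
  assumes "L \<noteq> []" "sorted_wrt (\<lambda>x y. A x < A y) L"
  shows "arg_min_on A (set L) = hd L"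
proof -
  have f: "finite (set L)" "set L \<noteq> {}" using assms by auto
  note m = arg_min_if_finite[OF f, of A]
  have "\<forall>y\<in>set L. A (arg_min_on A (set L)) \<le> A y" using m(2) by (auto simp: not_less)
  then show ?thesis using hd_min[OF assms(2) m(1)] by simp
qed

lemma first_out_block:
  fixes A :: "nat \<Rightarrow> real"
  assumes inj: "inj_on A {1..n}" and "wfb n A Ls" "good A G Ls" "L \<in> set Ls"
  shows "(\<forall>x y. (x,y) \<in> set (zip L (tl L)) \<longrightarrow> first_out n G A (set L) x = Some y) \<and>
         first_out n G A (set L) (last L) = None"
proof -
  have sL: "sorted_wrt (\<lambda>x y. A x < A y) L" "L \<noteq> []" and LV: "set L \<subseteq> {1..n}"
    using assms(2,4) unfolding wfb_def by auto
  have arcs: "\<And>x w. x \<in> set L \<Longrightarrow> (x,w) \<in> G \<Longrightarrow> w \<in> set L \<Longrightarrow> A x < A w"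
  proof -
    fix x w assume h: "x \<in> set L" "(x,w) \<in> G" "w \<in> set L"
    then obtain M where "M \<in> set Ls" "x \<in> set M" "w \<in> set M" "A x < A w"
      using assms(3) unfolding good_def by blast
    then show "A x < A w" by simp
  qed
  show ?thesis
  proof (intro conjI allI impI)
    fix x y assume xy: "(x,y) \<in> set (zip L (tl L))"
    note c = consec[OF sL(1), THEN iffD1, OF xy]
    show "first_out n G A (set L) x = Some y"
    proof (rule first_out_some[OF inj])
      show "y \<in> {1..n}" using c LV by auto
      show "(x,y) \<in> G" using xy assms(3,4) unfolding good_def by auto
      show "y \<in> set L" using c by simp
      show "\<forall>w'\<in>{1..n}. (x, w') \<in> G \<and> w' \<in> set L \<longrightarrow> A y \<le> A w'"
        using c arcs by (meson not_le)
    qed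
  next
    show "first_out n G A (set L) (last L) = None"
    proof (rule first_out_none, intro ballI notI)
      fix w' assume "w' \<in> {1..n}" "(last L, w') \<in> G \<and> w' \<in> set L"
      then have "A (last L) < A w'" using arcs sL(2) by auto
      moreover have "A w' \<le> A (last L)"
      proof -
        obtain i where i: "i < length L" "L ! i = w'" using \<open>(last L, w') \<in> G \<and> w' \<in> set L\<close>
          by (meson in_set_conv_nth)
        have "last L = L ! (length L - 1)" using sL(2) by (simp add: last_conv_nth)
        then show ?thesis using i sL(1) unfolding sorted_wrt_iff_nth_less
          by (metis diff_Suc_1 dual_order.refl less_Suc_eq_le less_imp_le_nat linorder_neqE_nat
              not_less_eq Suc_pred length_greater_0_conv sL(2) less_imp_le)
      qed
      ultimately show False by simp
    qed
  qed
qed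

lemma sw_distinct:
  fixes A :: "nat \<Rightarrow> real"
  shows "sorted_wrt (\<lambda>x y. A x < A y) L \<Longrightarrow> distinct L"
  by (induction L) auto

lemma merge_props:
  fixes A :: "nat \<Rightarrow> real"
  assumes "inj_on A (set a \<union> set b)" "a \<noteq> []" "b \<noteq> []"
    "sorted_wrt (\<lambda>x y. A x < A y) a" "sorted_wrt (\<lambda>x y. A x < A y) b" "set a \<inter> set b = {}"
  shows "sort_key A (a @ b) \<noteq> []" "sorted_wrt (\<lambda>x y. A x < A y) (sort_key A (a @ b))"
    "set (sort_key A (a @ b)) = set a \<union> set b"
    "hd (sort_key A (a @ b)) = (if A (hd a) < A (hd b) then hd a else hd b)"
proof -
  show "sort_key A (a @ b) \<noteq> []" using assms(2) by (metis Nil_is_append_conv length_0_conv length_sort)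
  show st: "sorted_wrt (\<lambda>x y. A x < A y) (sort_key A (a @ b))"
    by (rule sorted_strict) (use assms in \<open>auto simp: sw_distinct\<close>)
  show s: "set (sort_key A (a @ b)) = set a \<union> set b" by simp
  have ha: "\<forall>y\<in>set a. A (hd a) \<le> A y" using hd_le[OF assms(4)] by blast
  have hb: "\<forall>y\<in>set b. A (hd b) \<le> A y" using hd_le[OF assms(5)] by blast
  have hab: "hd a \<in> set a" "hd b \<in> set b" using assms(2,3) by auto
  then have "A (hd a) \<noteq> A (hd b)" using assms(1,6) by (metis IntI UnI1 UnI2 empty_iff inj_onD)
  then show "hd (sort_key A (a @ b)) = (if A (hd a) < A (hd b) then hd a else hd b)"
  proof (cases "A (hd a) < A (hd b)")
    case True
    have "hd (sort_key A (a @ b)) = hd a"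
      by (rule hd_min[OF st]) (use True ha hb hab in force)+
    then show ?thesis using True by simp
  next
    case False
    have "hd (sort_key A (a @ b)) = hd b"
      by (rule hd_min[OF st]) (use False ha hb hab in force)+
    then show ?thesis using False by simp
  qed
qed

lemma mset_pm: "mset (concat (pm A Ls)) = mset (concat Ls)"
  by (induction A Ls rule: pm.induct) auto

lemma sub_pm: "\<forall>L\<in>set Ls. \<exists>M\<in>set (pm A Ls). set L \<subseteq> set M"
  by (induction A Ls rule: pm.induct) auto

lemma blocks_pm:
  fixes A :: "nat \<Rightarrow> real"
  shows "\<forall>L\<in>set Ls. L \<noteq> [] \<and> sorted_wrt (\<lambda>x y. A x < A y) L \<Longrightarrow> distinct (concat Ls) \<Longrightarrow>
    inj_on A (set (concat Ls)) \<Longrightarrow>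
    (\<forall>M\<in>set (pm A Ls). M \<noteq> [] \<and> sorted_wrt (\<lambda>x y. A x < A y) M) \<and>
    mstep_roots A (map hd Ls) = map hd (pm A Ls)"
proof (induction A Ls rule: pm.induct)
  case (1 A a b rest)
  have mp: "inj_on A (set a \<union> set b)" "a \<noteq> []" "b \<noteq> []"
    "sorted_wrt (\<lambda>x y. A x < A y) a" "sorted_wrt (\<lambda>x y. A x < A y) b" "set a \<inter> set b = {}"
    using "1.prems" by (auto intro: inj_on_subset)
  have IH: "(\<forall>M\<in>set (pm A rest). M \<noteq> [] \<and> sorted_wrt (\<lambda>x y. A x < A y) M) \<and>
    mstep_roots A (map hd rest) = map hd (pm A rest)"
    using "1.prems" by (intro "1.IH") (auto intro: inj_on_subset)
  show ?case using merge_props[OF mp] IH by simp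
qed auto

lemma len_pm: "length (pm A Ls) = (length Ls + 1) div 2"
  by (induction A Ls rule: pm.induct) auto

lemma wfb_pm:
  assumes inj: "inj_on A {1..n}" and "wfb n A Ls"
  shows "wfb n A (pm A Ls)" "mstep_roots A (map hd Ls) = map hd (pm A Ls)"
proof -
  have i: "inj_on A (set (concat Ls))" using assms(2) inj unfolding wfb_def by simp
  note b = blocks_pm[OF _ _ i] assms(2)[unfolded wfb_def]
  show "mstep_roots A (map hd Ls) = map hd (pm A Ls)" using b by blast
  have "distinct (concat (pm A Ls))" using mset_eq_imp_distinct_iff[OF mset_pm[of A Ls]] b by simp
  moreover have "set (concat (pm A Ls)) = {1..n}" using mset_eq_setD[OF mset_pm[of A Ls]] b by simp
  ultimately show "wfb n A (pm A Ls)" using b unfolding wfb_def by blast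
qed

lemma len_le_n:
  "distinct L \<Longrightarrow> set L \<subseteq> {1..n} \<Longrightarrow> length L \<le> n"
  by (metis card_atLeastAtMost card_mono diff_Suc_1 distinct_card finite_atLeastAtMost)

lemma arcs_pm:
  fixes A :: "nat \<Rightarrow> real"
  assumes inj: "inj_on A {1..n}" and wf: "wfb n A Ls" and gd: "good A G Ls"
  shows "set Ks \<subseteq> set Ls \<Longrightarrow> distinct (concat Ks) \<Longrightarrow>
    (\<forall>(u,w)\<in>mstep_arcs n A G (map hd Ks). \<exists>M\<in>set (pm A Ks). u \<in> set M \<and> w \<in> set M \<and> A u < A w) \<and>
    (\<forall>M\<in>set (pm A Ks). set (zip M (tl M)) \<subseteq> G \<union> mstep_arcs n A G (map hd Ks))"
proof (induction Ks rule: induct_list012)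
  case 1 then show ?case by simp
next
  case (2 x)
  then show ?case using gd unfolding good_def by auto
next
  case (3 a b rest)
  have ab: "a \<in> set Ls" "b \<in> set Ls" using "3.prems" by auto
  have sa: "a \<noteq> []" "sorted_wrt (\<lambda>x y. A x < A y) a" "set a \<subseteq> {1..n}"
    using wf ab(1) unfolding wfb_def by auto
  have sb: "b \<noteq> []" "sorted_wrt (\<lambda>x y. A x < A y) b" "set b \<subseteq> {1..n}"
    using wf ab(2) unfolding wfb_def by auto
  have dis: "set a \<inter> set b = {}" using "3.prems"(2) by auto
  have injab: "inj_on A (set a \<union> set b)" using inj sa(3) sb(3) by (auto intro: inj_on_subset)
  have IH: "(\<forall>(u,w)\<in>mstep_arcs n A G (map hd rest). \<exists>M\<in>set (pm A rest). u \<in> set M \<and> w \<in> set M \<and> A u < A w) \<and>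
    (\<forall>M\<in>set (pm A rest). set (zip M (tl M)) \<subseteq> G \<union> mstep_arcs n A G (map hd rest))"
    using "3.IH"(1) "3.prems" by auto
  define Z where "Z = zipm (2 * n + 2) A (first_out n G A (set a)) (first_out n G A (set b))
        (Some (hd a)) (Some (hd b))"
  have cm: "comp_merge n A G (hd a) (hd b) = Z"
    unfolding comp_merge_def Z_def Let_def
    using comp_block[OF wf gd ab(1)] comp_block[OF wf gd ab(2)] sa sb
      argmin_block[OF sa(1,2)] argmin_block[OF sb(1,2)] by simp
  have ms: "mstep_arcs n A G (map hd (a # b # rest)) = Z \<union> mstep_arcs n A G (map hd rest)"
    using cm by simp
  have len: "length a + length b \<le> 2 * n + 2"
    using len_le_n[OF sw_distinct[OF sa(2)] sa(3)] len_le_n[OF sw_distinct[OF sb(2)] sb(3)] by simp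
  note fa = first_out_block[OF inj wf gd ab(1)]
  note fb = first_out_block[OF inj wf gd ab(2)]
  have ZL: "Z \<subseteq> {(u,v). u \<in> set a \<union> set b \<and> v \<in> set a \<union> set b \<and> A u < A v}
   \<and> (\<forall>u v. ((u \<in> set a \<and> v \<in> set b) \<or> (u \<in> set b \<and> v \<in> set a)) \<and> A u < A v \<and>
         \<not>(\<exists>z\<in>set a \<union> set b. A u < A z \<and> A z < A v) \<longrightarrow> (u,v) \<in> Z)"
    unfolding Z_def
    by (rule zipm_lem) (use sa sb dis injab fa fb len in auto)
  note mp = merge_props[OF injab sa(1) sb(1) sa(2) sb(2) dis]
  define M0 where "M0 = sort_key A (a @ b)"
  have pmeq: "pm A (a # b # rest) = M0 # pm A rest" unfolding M0_def by simp
  show ?case unfolding ms pmeq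
  proof (intro conjI)
    show "\<forall>(u, w)\<in>Z \<union> mstep_arcs n A G (map hd rest).
       \<exists>M\<in>set (M0 # pm A rest). u \<in> set M \<and> w \<in> set M \<and> A u < A w"
    proof
      fix p assume "p \<in> Z \<union> mstep_arcs n A G (map hd rest)"
      then show "case p of (u, w) \<Rightarrow> \<exists>M\<in>set (M0 # pm A rest). u \<in> set M \<and> w \<in> set M \<and> A u < A w"
      proof
        assume "p \<in> Z" then show ?thesis using ZL mp(3) unfolding M0_def by auto
      next
        assume "p \<in> mstep_arcs n A G (map hd rest)" then show ?thesis using IH by auto
      qed
    qed
    show "\<forall>M\<in>set (M0 # pm A rest). set (zip M (tl M)) \<subseteq> G \<union> (Z \<union> mstep_arcs n A G (map hd rest))"
    proof
      fix M assume "M \<in> set (M0 # pm A rest)"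
      then consider "M = M0" | "M \<in> set (pm A rest)" by auto
      then show "set (zip M (tl M)) \<subseteq> G \<union> (Z \<union> mstep_arcs n A G (map hd rest))"
      proof cases
        case 2 then show ?thesis using IH by auto
      next
        case 1
        show ?thesis
        proof
          fix p assume p: "p \<in> set (zip M (tl M))"
          obtain x y where xy: "p = (x,y)" by fastforce
          have c: "x \<in> set a \<union> set b" "y \<in> set a \<union> set b" "A x < A y"
              "\<not>(\<exists>z\<in>set a \<union> set b. A x < A z \<and> A z < A y)"
            using consec[OF mp(2), of x y] p xy 1 mp(3) unfolding M0_def by auto
          show "p \<in> G \<union> (Z \<union> mstep_arcs n A G (map hd rest))"
          proof (cases "x \<in> set a \<and> y \<in> set a")
            case True
            then have "(x,y) \<in> set (zip a (tl a))" using consec[OF sa(2), of x y] c by auto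
            then show ?thesis using gd ab(1) xy unfolding good_def by auto
          next
            case na: False
            show ?thesis
            proof (cases "x \<in> set b \<and> y \<in> set b")
              case True
              then have "(x,y) \<in> set (zip b (tl b))" using consec[OF sb(2), of x y] c by auto
              then show ?thesis using gd ab(2) xy unfolding good_def by auto
            next
              case False
              then have "(x \<in> set a \<and> y \<in> set b) \<or> (x \<in> set b \<and> y \<in> set a)" using na c by auto
              then have "(x,y) \<in> Z" using ZL c by blast
              then show ?thesis using xy by simp
            qed
          qed
        qed
      qed
    qed
  qed
qed

lemma dfs_good:
  fixes A :: "nat \<Rightarrow> real"
  assumes inj: "inj_on A {1..n}" and wf: "wfb n A Ms" and gd: "good A H Ms"
  shows "dfs_forest n H A (map hd Ms) = chains Ms"
proof (rule dfs_forest_chains[OF inj])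
  show "\<forall>(x, w)\<in>H. A x < A w" using gd unfolding good_def by fast
  show "distinct (concat Ms)" using wf unfolding wfb_def by simp
  show "\<forall>L\<in>set Ms. sorted_wrt (\<lambda>x y. A x < A y) L \<and> L \<noteq> [] \<and> set L \<subseteq> {1..n} \<and>
        (\<forall>x\<in>set L. \<forall>w\<in>{1..n}. (x,w)\<in>H \<longrightarrow> w \<in> set L) \<and> set (zip L (tl L)) \<subseteq> H"
  proof (intro ballI conjI impI)
    fix L x w assume L: "L \<in> set Ms" and x: "x \<in> set L" and w: "(x,w) \<in> H"
    then obtain M where M: "M \<in> set Ms" "x \<in> set M" "w \<in> set M" using gd unfolding good_def by blast
    then have "M = L" using block_unique[of Ms M L x] wf L x unfolding wfb_def by blast
    then show "w \<in> set L" using M by simp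
  qed (use wf gd in \<open>auto simp: wfb_def good_def\<close>)
qed

lemma good_chains:
  fixes A :: "nat \<Rightarrow> real"
  assumes "wfb n A Ms" shows "good A (chains Ms) Ms"
  unfolding good_def chains_def
proof (intro conjI ballI)
  fix p assume "p \<in> (\<Union>L\<in>set Ms. set (zip L (tl L)))"
  then obtain L where L: "L \<in> set Ms" "p \<in> set (zip L (tl L))" by blast
  obtain u w where p: "p = (u,w)" by fastforce
  have "sorted_wrt (\<lambda>x y. A x < A y) L" using assms L unfolding wfb_def by auto
  then show "case p of (u, w) \<Rightarrow> \<exists>L\<in>set Ms. u \<in> set L \<and> w \<in> set L \<and> A u < A w"
    using consec[of A L u w] L p by auto
qed auto

lemma good_merge:
  fixes A :: "nat \<Rightarrow> real"
  assumes inj: "inj_on A {1..n}" and wf: "wfb n A Ls" and gd: "good A G Ls"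
  shows "good A (G \<union> mstep_arcs n A G (map hd Ls)) (pm A Ls)"
proof -
  have d: "distinct (concat Ls)" using wf unfolding wfb_def by simp
  note ap = arcs_pm[OF inj wf gd order_refl d]
  have "\<forall>(u,w)\<in>G. \<exists>M\<in>set (pm A Ls). u \<in> set M \<and> w \<in> set M \<and> A u < A w"
  proof
    fix p assume "p \<in> G"
    then obtain L u w where h: "p = (u,w)" "L \<in> set Ls" "u \<in> set L" "w \<in> set L" "A u < A w"
      using gd unfolding good_def by blast
    then obtain M where "M \<in> set (pm A Ls)" "set L \<subseteq> set M" using sub_pm[of Ls A] by blast
    then show "case p of (u,w) \<Rightarrow> \<exists>M\<in>set (pm A Ls). u \<in> set M \<and> w \<in> set M \<and> A u < A w"
      using h by auto
  qed
  then show ?thesis using ap unfolding good_def by blast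
qed

lemma round_lem:
  fixes A :: "nat \<Rightarrow> real"
  assumes inj: "inj_on A {1..n}" and wf: "wfb n A Ls" and gd: "good A G Ls"
  shows "round_step n A (G, map hd Ls) = (chains (pm A Ls), map hd (pm A Ls))"
proof -
  have r: "mstep_roots A (map hd Ls) = map hd (pm A Ls)" using wfb_pm[OF inj wf] by simp
  have "dfs_forest n (G \<union> mstep_arcs n A G (map hd Ls)) A (map hd (pm A Ls)) = chains (pm A Ls)"
    by (rule dfs_good[OF inj wfb_pm(1)[OF inj wf] good_merge[OF inj wf gd]])
  then show ?thesis unfolding round_step_def merge_step_def using r by simp
qed

lemma iter_lem:
  fixes A :: "nat \<Rightarrow> real"
  assumes inj: "inj_on A {1..n}" and wf: "wfb n A Ls" and gd: "good A G Ls"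
  shows "(round_step n A ^^ Suc i) (G, map hd Ls) = (chains ((pm A ^^ Suc i) Ls), map hd ((pm A ^^ Suc i) Ls))
     \<and> wfb n A ((pm A ^^ Suc i) Ls)"
proof (induction i)
  case 0
  then show ?case using round_lem[OF inj wf gd] wfb_pm[OF inj wf] by simp
next
  case (Suc i)
  let ?M = "(pm A ^^ Suc i) Ls"
  have "(round_step n A ^^ Suc (Suc i)) (G, map hd Ls) = round_step n A (chains ?M, map hd ?M)"
    using Suc by simp
  also have "\<dots> = (chains (pm A ?M), map hd (pm A ?M))"
    using round_lem[OF inj _ good_chains] Suc by blast
  finally show ?case using wfb_pm[OF inj] Suc by simp
qed

lemma len_iter: "length ((pm A ^^ i) Ls) \<le> 1 \<or> length ((pm A ^^ i) Ls) + i \<le> length Ls"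
proof (induction i)
  case 0 then show ?case by simp
next
  case (Suc i)
  then show ?case using len_pm[of A "(pm A ^^ i) Ls"] by auto
qed

lemma order_claim:
  assumes L: "\<forall>a. Suc a < length L \<longrightarrow> (\<exists>i j. i < j \<and> j < length ord \<and> ord ! i = L ! a \<and> ord ! j = L ! Suc a)"
    and d: "distinct ord" and sub: "set L \<subseteq> set ord"
  shows "a + Suc d < length L \<Longrightarrow> i < length ord \<Longrightarrow> j < length ord \<Longrightarrow> ord ! i = L ! a \<Longrightarrow>
     ord ! j = L ! (a + Suc d) \<Longrightarrow> i < j"
proof (induction d arbitrary: j)
  case 0
  obtain i' j' where h: "i' < j'" "j' < length ord" "ord ! i' = L ! a" "ord ! j' = L ! Suc a"
    using L 0 by auto
  have "i' = i" using h 0 d by (metis nth_eq_iff_index_eq order.strict_trans)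
  moreover have "j' = j" using h 0 d by (metis nth_eq_iff_index_eq add_Suc_right add_0_right)
  ultimately show ?case using h by simp
next
  case (Suc d)
  have "L ! (a + Suc d) \<in> set ord" using sub Suc.prems(1) by auto
  then obtain k where k: "k < length ord" "ord ! k = L ! (a + Suc d)" by (meson in_set_conv_nth)
  have ik: "i < k" using Suc.IH[OF _ Suc.prems(2) k(1) Suc.prems(4) k(2)] Suc.prems(1) by simp
  obtain i' j' where h: "i' < j'" "j' < length ord" "ord ! i' = L ! (a + Suc d)" "ord ! j' = L ! Suc (a + Suc d)"
    using L Suc.prems(1) by auto
  have "i' = k" using h k d by (metis nth_eq_iff_index_eq order.strict_trans)
  moreover have "j' = j" using h Suc.prems d by (metis nth_eq_iff_index_eq add_Suc_right)
  ultimately show ?case using h ik by simp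
qed

lemma final_lem:
  fixes A :: "nat \<Rightarrow> real"
  assumes inj: "inj_on A {1..n}" and sL: "sorted_wrt (\<lambda>x y. A x < A y) L" and setL: "set L = {1..n}"
  shows "is_ham_path_graph n (set (zip L (tl L))) \<and>
    (\<forall>ord. is_topsort n (set (zip L (tl L))) ord \<longleftrightarrow> is_sorted_indices n A ord)"
proof (intro conjI allI iffI)
  have dL: "distinct L" using sw_distinct[OF sL] .
  show "is_ham_path_graph n (set (zip L (tl L)))" unfolding is_ham_path_graph_def
    using dL setL by blast
next
  fix ord assume h: "is_sorted_indices n A ord"
  have dL: "distinct L" using sw_distinct[OF sL] .
  have "map A ord = map A L"
  proof (rule sorted_distinct_set_unique)
    show "sorted (map A ord)" using h unfolding is_sorted_indices_def
      by (simp add: sorted_wrt_map) (metis (mono_tags, lifting) less_imp_le sorted_wrt_mono_rel)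
    show "sorted (map A L)" using sL
      by (simp add: sorted_wrt_map) (metis (mono_tags, lifting) less_imp_le sorted_wrt_mono_rel)
    show "distinct (map A ord)" using h inj unfolding is_sorted_indices_def
      by (simp add: distinct_map)
    show "distinct (map A L)" using dL inj setL by (simp add: distinct_map)
    show "set (map A ord) = set (map A L)" using h setL unfolding is_sorted_indices_def by simp
  qed
  then have "ord = L" using inj h setL unfolding is_sorted_indices_def
    by (metis inj_on_map_eq_map Un_absorb)
  then show "is_topsort n (set (zip L (tl L))) ord" unfolding is_topsort_def
  proof (intro conjI)
    show "distinct ord" "set ord = {1..n}" using h unfolding is_sorted_indices_def by auto
    show "\<forall>(u, v)\<in>set (zip L (tl L)). \<exists>i j. i < j \<and> j < length ord \<and> ord ! i = u \<and> ord ! j = v"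
    proof
      fix p assume "p \<in> set (zip L (tl L))"
      then obtain k where k: "k < length L" "k < length (tl L)" "p = (L ! k, tl L ! k)"
        by (auto simp: in_set_zip)
      then show "case p of (u,v) \<Rightarrow> \<exists>i j. i < j \<and> j < length ord \<and> ord ! i = u \<and> ord ! j = v"
      proof -
        have "k < Suc k \<and> Suc k < length ord \<and> ord ! k = L ! k \<and> ord ! Suc k = tl L ! k"
          using k \<open>ord = L\<close> by (simp add: nth_tl)
        then show ?thesis using k(3) by blast
      qed
    qed
  qed
next
  fix ord assume h: "is_topsort n (set (zip L (tl L))) ord"
  have d: "distinct ord" and so: "set ord = {1..n}" using h unfolding is_topsort_def by auto
  have Lc: "\<forall>a. Suc a < length L \<longrightarrow> (\<exists>i j. i < j \<and> j < length ord \<and> ord ! i = L ! a \<and> ord ! j = L ! Suc a)"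
  proof (intro allI impI)
    fix a assume a: "Suc a < length L"
    then have "(L ! a, L ! Suc a) \<in> set (zip L (tl L))"
      by (auto simp: in_set_zip nth_tl intro!: exI[of _ a])
    then show "\<exists>i j. i < j \<and> j < length ord \<and> ord ! i = L ! a \<and> ord ! j = L ! Suc a"
      using h unfolding is_topsort_def by fast
  qed
  have sub: "set L \<subseteq> set ord" using so setL by simp
  have "sorted_wrt (\<lambda>x y. A x < A y) ord" unfolding sorted_wrt_iff_nth_less
  proof (intro allI impI)
    fix i j assume ij: "i < j" "j < length ord"
    have "ord ! i \<in> set L" "ord ! j \<in> set L" using ij so setL by auto
    then obtain a b where ab: "a < length L" "L ! a = ord ! i" "b < length L" "L ! b = ord ! j"
      by (meson in_set_conv_nth)
    have "ord ! i \<noteq> ord ! j" using ij d by (simp add: nth_eq_iff_index_eq)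
    then have "a \<noteq> b" using ab by auto
    moreover have "\<not> b < a"
    proof
      assume "b < a"
      define dd where "dd = a - b - 1"
      have add: "a = b + Suc dd" using \<open>b < a\<close> unfolding dd_def by simp
      have e: "ord ! i = L ! (b + Suc dd)" using ab(2) add by simp
      have "j < i"
        by (rule order_claim[OF Lc d sub]) (use ab ij e add in auto)
      then show False using ij by simp
    qed
    ultimately have "a < b" by simp
    then show "A (ord ! i) < A (ord ! j)" using sL ab unfolding sorted_wrt_iff_nth_less by metis
  qed
  then show "is_sorted_indices n A ord" unfolding is_sorted_indices_def using d so by simp
qed

definition forest_ok :: "nat \<Rightarrow> (nat \<Rightarrow> real) \<Rightarrow> graph \<Rightarrow> bool" where
  "forest_ok n A F \<longleftrightarrow> (\<forall>(u,w)\<in>F. u \<in> {1..n} \<and> w \<in> {1..n} \<and> A u < A w) \<and>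
     (\<forall>u u' w. (u,w) \<in> F \<longrightarrow> (u',w) \<in> F \<longrightarrow> u = u')"

lemma fo_arc: "forest_ok n A F \<Longrightarrow> (u,w) \<in> F \<Longrightarrow> u \<in> {1..n} \<and> w \<in> {1..n} \<and> A u < A w"
  unfolding forest_ok_def by blast

lemma fo_par: "forest_ok n A F \<Longrightarrow> (u,w) \<in> F \<Longrightarrow> (u',w) \<in> F \<Longrightarrow> u = u'"
  unfolding forest_ok_def by blast

lemma fo_mono: assumes "forest_ok n A F" shows "(a,b) \<in> F\<^sup>* \<Longrightarrow> a = b \<or> A a < A b"
proof (induction rule: rtrancl_induct)
  case base then show ?case by simp
next
  case (step b c) then show ?case using fo_arc[OF assms, of b c] by auto
qed

lemma fo_cover:
  assumes fo: "forest_ok n A F" and v: "v \<in> {1..n}"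
  shows "\<exists>r\<in>roots n F. (r,v) \<in> F\<^sup>*"
proof -
  let ?S = "{u \<in> {1..n}. (u,v) \<in> F\<^sup>*}"
  have f: "finite ?S" "?S \<noteq> {}" using v by auto
  note m = arg_min_if_finite[OF f, of A]
  let ?m = "arg_min_on A ?S"
  have "?m \<in> roots n F" unfolding roots_def
  proof (intro CollectI conjI allI notI)
    show "?m \<in> {1..n}" using m(1) by simp
    fix u assume "(u, ?m) \<in> F"
    then have "u \<in> {1..n}" "A u < A ?m" "(u,v) \<in> F\<^sup>*" using fo_arc[OF fo] m(1)
      by (auto intro: converse_rtrancl_into_rtrancl)
    then show False using m(2) by auto
  qed
  then show ?thesis using m(1) by blast
qed

lemma fo_inlin:
  assumes fo: "forest_ok n A F"
  shows "(x,v) \<in> F\<^sup>* \<Longrightarrow> (y,v) \<in> F\<^sup>* \<Longrightarrow> (x,y) \<in> F\<^sup>* \<or> (y,x) \<in> F\<^sup>*"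
proof (induction rule: rtrancl_induct)
  case base then show ?case by simp
next
  case (step b c)
  from step.prems show ?case
  proof (cases rule: rtranclE)
    case base then show ?thesis using step.hyps by auto
  next
    case (step b')
    then have "b' = b" using fo_par[OF fo] \<open>(b,c) \<in> F\<close> by blast
    then show ?thesis using step.IH step by auto
  qed
qed

lemma fo_root_unique:
  assumes fo: "forest_ok n A F" and r: "r1 \<in> roots n F" "r2 \<in> roots n F"
    and "(r1,v) \<in> F\<^sup>*" "(r2,v) \<in> F\<^sup>*"
  shows "r1 = r2"
proof -
  have "(r1,r2) \<in> F\<^sup>* \<or> (r2,r1) \<in> F\<^sup>*" using fo_inlin[OF fo assms(4,5)] .
  then show ?thesis
  proof
    assume "(r1,r2) \<in> F\<^sup>*" then show ?thesis using r(2) unfolding roots_def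
      by (cases rule: rtranclE) auto
  next
    assume "(r2,r1) \<in> F\<^sup>*" then show ?thesis using r(1) unfolding roots_def
      by (cases rule: rtranclE) auto
  qed
qed

lemma fo_outlin:
  assumes od: "\<forall>w. (v,w) \<in> F\<^sup>* \<longrightarrow> (\<forall>c1 c2. (w,c1) \<in> F \<longrightarrow> (w,c2) \<in> F \<longrightarrow> c1 = c2)"
  shows "(v,y) \<in> F\<^sup>* \<Longrightarrow> (v,x) \<in> F\<^sup>* \<Longrightarrow> (x,y) \<in> F\<^sup>* \<or> (y,x) \<in> F\<^sup>*"
proof (induction rule: rtrancl_induct)
  case base then show ?case by simp
next
  case (step b c)
  from step.IH[OF step.prems] show ?case
  proof
    assume "(x,b) \<in> F\<^sup>*" then show ?thesis using step.hyps(2) by auto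
  next
    assume "(b,x) \<in> F\<^sup>*"
    then show ?thesis
    proof (cases rule: converse_rtranclE)
      case base then show ?thesis using step.hyps(2) by auto
    next
      case (step b')
      then have "b' = c" using od \<open>(v,b) \<in> F\<^sup>*\<close> \<open>(b,c) \<in> F\<close> by blast
      then show ?thesis using step by auto
    qed
  qed
qed

lemma fo_chain:
  assumes fo: "forest_ok n A F" and inj: "inj_on A {1..n}"
    and od: "\<forall>w. (v,w) \<in> F\<^sup>* \<longrightarrow> (\<forall>c1 c2. (w,c1) \<in> F \<longrightarrow> (w,c2) \<in> F \<longrightarrow> c1 = c2)"
    and x: "(v,x) \<in> F\<^sup>*" and y: "(v,y) \<in> F\<^sup>*" and lt: "A x < A y"
    and nb: "\<not>(\<exists>z. (v,z) \<in> F\<^sup>* \<and> A x < A z \<and> A z < A y)"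
  shows "(x,y) \<in> F"
proof -
  have "(x,y) \<in> F\<^sup>* \<or> (y,x) \<in> F\<^sup>*" using fo_outlin[OF od y x] .
  moreover have "(y,x) \<notin> F\<^sup>*" using fo_mono[OF fo, of y x] lt by auto
  ultimately have xy: "(x,y) \<in> F\<^sup>*" by simp
  then show ?thesis
  proof (cases rule: converse_rtranclE)
    case base then show ?thesis using lt by simp
  next
    case (step c)
    have "(v,c) \<in> F\<^sup>*" using x step(1) by simp
    moreover have "A x < A c" using fo_arc[OF fo step(1)] by simp
    moreover have "c = y \<or> A c < A y" using fo_mono[OF fo step(2)] .
    ultimately have "c = y" using nb by auto
    then show ?thesis using step by simp
  qed
qed

definition parok :: "graph \<Rightarrow> (nat \<Rightarrow> nat option) \<Rightarrow> bool" where
  "parok G par \<longleftrightarrow> (\<forall>w u. par w = Some u \<longrightarrow> (u,w) \<in> G)"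

lemma visit_parok:
  shows "parok G (snd st) \<Longrightarrow> parok G (snd (visit k n G A u st))"
    and "parok G (snd st) \<Longrightarrow> (\<forall>w\<in>set ws. (u,w) \<in> G) \<Longrightarrow> parok G (snd (visit_list k n G A u ws st))"
proof (induction k n G A u st and k n G A u ws st rule: visit_visit_list.induct)
  case (1 n G A u st) then show ?case by simp
next
  case (2 k n G A u vis par)
  have "\<forall>w\<in>set (out_sorted n G A u). (u,w) \<in> G" unfolding out_sorted_def by simp
  then show ?case using 2 by simp
next
  case (3 k n G A u st) then show ?case by simp
next
  case (4 k n G A u w ws vis par)
  show ?case
  proof (cases "w \<in> vis")
    case True then show ?thesis using 4 by simp
  next
    case False
    have "parok G (par(w := Some u))" using "4.prems" unfolding parok_def by auto
    moreover have "parok G (\<lambda>a. if a = w then Some u else par a)" using "4.prems" unfolding parok_def by auto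
    ultimately have "parok G (snd (visit k n G A w (vis, par(w := Some u))))" using 4 False by simp
    then show ?thesis using 4 False by (simp add: prod.collapse)
  qed
qed

lemma dfs_run_parok: "parok G (snd st) \<Longrightarrow> parok G (snd (dfs_run n G A ls st))"
proof (induction n G A ls st rule: dfs_run.induct)
  case (1 n G A st) then show ?case by simp
next
  case (2 n G A l ls vis par)
  then show ?case using visit_parok(1)[of G "(vis,par)" "Suc n" n A l] by (auto simp: prod.collapse)
qed

lemma dfs_forest_sub: "dfs_forest n G A ls \<subseteq> G"
proof -
  have "parok G (snd (dfs_run n G A ls ({}, \<lambda>_. None)))"
    by (rule dfs_run_parok) (simp add: parok_def)
  then show ?thesis unfolding dfs_forest_def parok_def by auto
qed

lemma dfs_forest_par: "(u,w) \<in> dfs_forest n G A ls \<Longrightarrow> (u',w) \<in> dfs_forest n G A ls \<Longrightarrow> u = u'"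
  unfolding dfs_forest_def by auto

lemma mod_inj_V: "w1 \<in> {1..(n::nat)} \<Longrightarrow> w2 \<in> {1..n} \<Longrightarrow> w1 mod n = w2 mod n \<Longrightarrow> w1 = w2"
proof -
  assume h: "w1 \<in> {1..n}" "w2 \<in> {1..n}" "w1 mod n = w2 mod n"
  have e: "\<And>w. w \<in> {1..n} \<Longrightarrow> w mod n = (if w = n then 0 else w)" by auto
  show ?thesis using h e[OF h(1)] e[OF h(2)] by (auto split: if_splits)
qed

lemma mod_suc_cancel: assumes h: "(Suc w1) mod (n::nat) = (Suc w2) mod n" shows "w1 mod n = w2 mod n"
proof (cases "n = 0")
  case True then show ?thesis using h by simp
next
  case False
  have e: "w mod n = (Suc w mod n + (n - 1)) mod n" for w
  proof -
    have "w mod n = (w + n) mod n" by simp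
    also have "w + n = Suc w + (n - 1)" using False by simp
    also have "(Suc w + (n - 1)) mod n = (Suc w mod n + (n - 1)) mod n" by (simp add: mod_add_left_eq)
    finally show ?thesis .
  qed
  show ?thesis using e[of w1] e[of w2] h by simp
qed

definition adj :: "nat \<Rightarrow> nat \<Rightarrow> nat \<Rightarrow> bool" where
  "adj n u w \<longleftrightarrow> w mod n = (u + 1) mod n \<or> u mod n = (w + 1) mod n"

lemma corr_adj: "(u,w) \<in> corr_graph n 1 A \<Longrightarrow> u \<in> {1..n} \<and> w \<in> {1..n} \<and> A u < A w \<and> adj n u w \<and> adj n w u"
  unfolding corr_graph_def adj_def by auto

lemma adj_two:
  assumes "x \<in> {1..n}" "y \<in> {1..n}" "z \<in> {1..n}" "adj n v x" "adj n v y" "adj n v z"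
  shows "x = y \<or> x = z \<or> y = z"
proof -
  have s1: "\<And>a b. a \<in> {1..n} \<Longrightarrow> b \<in> {1..n} \<Longrightarrow> a mod n = (v+1) mod n \<Longrightarrow> b mod n = (v+1) mod n \<Longrightarrow> a = b"
    using mod_inj_V by metis
  have s2: "\<And>a b. a \<in> {1..n} \<Longrightarrow> b \<in> {1..n} \<Longrightarrow> v mod n = (a+1) mod n \<Longrightarrow> v mod n = (b+1) mod n \<Longrightarrow> a = b"
  proof -
    fix a b assume h: "a \<in> {1..n}" "b \<in> {1..n}" "v mod n = (a+1) mod n" "v mod n = (b+1) mod n"
    then have "Suc a mod n = Suc b mod n" by simp
    then have "a mod n = b mod n" by (rule mod_suc_cancel)
    then show "a = b" using mod_inj_V h by blast
  qed
  show ?thesis using assms(1-3) assms(4-6)[unfolded adj_def] s1 s2 by blast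
qed

lemma F_ok:
  "forest_ok n A (dfs_forest n (corr_graph n 1 A) A vl)"
  unfolding forest_ok_def using dfs_forest_sub[of n "corr_graph n 1 A" A vl] corr_adj[of _ _ n A]
    dfs_forest_par[of _ _ n "corr_graph n 1 A" A vl] by blast

lemma F_nonroot:
  assumes "F = dfs_forest n (corr_graph n 1 A) A vl"
  shows "\<forall>u v c1 c2. (u,v) \<in> F \<longrightarrow> (v,c1) \<in> F \<longrightarrow> (v,c2) \<in> F \<longrightarrow> c1 = c2"
proof (intro allI impI)
  fix u v c1 c2 assume h: "(u,v) \<in> F" "(v,c1) \<in> F" "(v,c2) \<in> F"
  have sub: "F \<subseteq> corr_graph n 1 A" using assms dfs_forest_sub by blast
  note a1 = corr_adj[of u v n A] and a2 = corr_adj[of v c1 n A] and a3 = corr_adj[of v c2 n A]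
  have "u = c1 \<or> u = c2 \<or> c1 = c2" using adj_two[of u n c1 c2 v] a1 a2 a3 h sub by blast
  moreover have "u \<noteq> c1" "u \<noteq> c2" using a1 a2 a3 h sub by force+
  ultimately show "c1 = c2" by simp
qed

lemma F_root:
  assumes "F = dfs_forest n (corr_graph n 1 A) A vl"
  shows "(\<forall>c1 c2. (r,c1) \<in> F \<longrightarrow> (r,c2) \<in> F \<longrightarrow> c1 = c2) \<or> (\<exists>a b. a \<noteq> b \<and> {w. (r,w) \<in> F} = {a,b})"
proof (cases "\<forall>c1 c2. (r,c1) \<in> F \<longrightarrow> (r,c2) \<in> F \<longrightarrow> c1 = c2")
  case True then show ?thesis by simp
next
  case False
  then obtain a b where ab: "(r,a) \<in> F" "(r,b) \<in> F" "a \<noteq> b" by blast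
  have sub: "F \<subseteq> corr_graph n 1 A" using assms dfs_forest_sub by blast
  have "{w. (r,w) \<in> F} = {a,b}"
  proof
    show "{a,b} \<subseteq> {w. (r,w) \<in> F}" using ab by simp
    show "{w. (r,w) \<in> F} \<subseteq> {a,b}"
    proof
      fix c assume "c \<in> {w. (r,w) \<in> F}"
      then have c: "(r,c) \<in> F" by simp
      note a1 = corr_adj[of r a n A] and a2 = corr_adj[of r b n A] and a3 = corr_adj[of r c n A]
      have "a = b \<or> a = c \<or> b = c" using adj_two[of a n b c r] a1 a2 a3 ab c sub by blast
      then show "c \<in> {a,b}" using ab by auto
    qed
  qed
  then show ?thesis using ab by blast
qed

definition T :: "graph \<Rightarrow> nat \<Rightarrow> nat set" where "T F v = {w. (v,w) \<in> F\<^sup>*}"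

definition blk :: "(nat \<Rightarrow> real) \<Rightarrow> graph \<Rightarrow> nat \<Rightarrow> nat list" where
  "blk A F v = sort_key A (sorted_list_of_set (T F v))"

lemma T_sub: assumes fo: "forest_ok n A F" and v: "v \<in> {1..n}" shows "T F v \<subseteq> {1..n}"
proof
  fix w assume "w \<in> T F v"
  then have "(v,w) \<in> F\<^sup>*" unfolding T_def by simp
  then show "w \<in> {1..n}" using v fo_arc[OF fo] by (cases rule: rtranclE) auto
qed

lemma T_min: assumes fo: "forest_ok n A F" shows "w \<in> T F v \<Longrightarrow> A v \<le> A w"
  unfolding T_def using fo_mono[OF fo, of v w] by auto

lemma last_max:
  fixes A :: "nat \<Rightarrow> real"
  shows "sorted_wrt (\<lambda>x y. A x < A y) L \<Longrightarrow> y \<in> set L \<Longrightarrow> A y \<le> A (last L)"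
proof (induction L)
  case Nil then show ?case by simp
next
  case (Cons a L)
  show ?case
  proof (cases "L = []")
    case True then show ?thesis using Cons by simp
  next
    case False
    have "last L \<in> set L" using False by simp
    then have "A a < A (last L)" using Cons.prems(1) by simp
    then show ?thesis using Cons False by (cases "y = a") (auto simp: less_imp_le)
  qed
qed

lemma blk_props:
  fixes A :: "nat \<Rightarrow> real"
  assumes inj: "inj_on A {1..n}" and fo: "forest_ok n A F" and v: "v \<in> {1..n}"
  shows "set (blk A F v) = T F v" "sorted_wrt (\<lambda>x y. A x < A y) (blk A F v)" "blk A F v \<noteq> []"
    "hd (blk A F v) = v"
proof -
  have fin: "finite (T F v)" using T_sub[OF fo v] finite_subset by blast
  show s: "set (blk A F v) = T F v" unfolding blk_def using fin by simp
  show st: "sorted_wrt (\<lambda>x y. A x < A y) (blk A F v)" unfolding blk_def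
    by (rule sorted_strict) (use fin T_sub[OF fo v] inj in \<open>auto intro: inj_on_subset\<close>)
  have vT: "v \<in> T F v" unfolding T_def by simp
  then show "blk A F v \<noteq> []" using s by auto
  show "hd (blk A F v) = v" using hd_min[OF st] vT s T_min[OF fo] by auto
qed

definition od :: "graph \<Rightarrow> nat \<Rightarrow> bool" where
  "od F v \<longleftrightarrow> (\<forall>w. (v,w) \<in> F\<^sup>* \<longrightarrow> (\<forall>c1 c2. (w,c1) \<in> F \<longrightarrow> (w,c2) \<in> F \<longrightarrow> c1 = c2))"

lemma od_nonroot:
  assumes nro: "\<forall>u v c1 c2. (u,v) \<in> F \<longrightarrow> (v,c1) \<in> F \<longrightarrow> (v,c2) \<in> F \<longrightarrow> c1 = c2"
    and "(u,v) \<in> F"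
  shows "od F v"
  unfolding od_def
proof (intro allI impI)
  fix w c1 c2 assume "(v,w) \<in> F\<^sup>*" "(w,c1) \<in> F" "(w,c2) \<in> F"
  moreover from \<open>(v,w) \<in> F\<^sup>*\<close> have "\<exists>p. (p,w) \<in> F" using assms(2) by (cases rule: rtranclE) auto
  ultimately show "c1 = c2" using nro by blast
qed

lemma chain_nx:
  fixes A :: "nat \<Rightarrow> real"
  assumes inj: "inj_on A {1..n}" and fo: "forest_ok n A F" and v: "v \<in> {1..n}" and odv: "od F v"
  shows "(\<forall>x y. (x,y) \<in> set (zip (blk A F v) (tl (blk A F v))) \<longrightarrow> first_out n F A UNIV x = Some y) \<and>
     first_out n F A UNIV (last (blk A F v)) = None"
proof (intro conjI allI impI)
  note bp = blk_props[OF inj fo v]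
  fix x y assume xy: "(x,y) \<in> set (zip (blk A F v) (tl (blk A F v)))"
  note c = consec[OF bp(2), THEN iffD1, OF xy]
  have xyF: "(x,y) \<in> F"
    by (rule fo_chain[OF fo inj odv[unfolded od_def]]) (use c bp(1) in \<open>auto simp: T_def\<close>)
  have xT: "(v,x) \<in> F\<^sup>*" using c bp(1) by (auto simp: T_def)
  show "first_out n F A UNIV x = Some y"
  proof (rule first_out_some[OF inj])
    show "y \<in> {1..n}" using fo_arc[OF fo xyF] by simp
    show "(x,y) \<in> F" by fact
    show "y \<in> UNIV" by simp
    show "\<forall>w'\<in>{1..n}. (x, w') \<in> F \<and> w' \<in> UNIV \<longrightarrow> A y \<le> A w'"
      using odv xT xyF unfolding od_def by blast
  qed
next
  note bp = blk_props[OF inj fo v]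
  let ?l = "last (blk A F v)"
  have lT: "?l \<in> T F v" using bp(1,3) last_in_set by blast
  show "first_out n F A UNIV ?l = None"
  proof (rule first_out_none, intro ballI notI)
    fix w' assume "w' \<in> {1..n}" "(?l, w') \<in> F \<and> w' \<in> UNIV"
    then have "(?l, w') \<in> F" by simp
    then have "w' \<in> T F v" "A ?l < A w'" using lT fo_arc[OF fo] unfolding T_def by auto
    then show False using last_max[OF bp(2)] bp(1) by force
  qed
qed

lemma branch:
  fixes A :: "nat \<Rightarrow> real"
  assumes inj: "inj_on A {1..n}" and fo: "forest_ok n A F"
    and nro: "\<forall>u v c1 c2. (u,v) \<in> F \<longrightarrow> (v,c1) \<in> F \<longrightarrow> (v,c2) \<in> F \<longrightarrow> c1 = c2"
    and r: "r \<in> roots n F" and ab: "a \<noteq> b" and ch: "{w. (r,w) \<in> F} = {a,b}"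
  shows "T F a \<inter> T F b = {}" "T F r = insert r (T F a \<union> T F b)" "od F a"
    "zipm (2*n+2) A (first_out n F A UNIV) (first_out n F A UNIV) (Some a) (Some b) \<subseteq>
            {(u,v). u \<in> T F a \<union> T F b \<and> v \<in> T F a \<union> T F b \<and> A u < A v}"
    "\<forall>u v. ((u \<in> T F a \<and> v \<in> T F b) \<or> (u \<in> T F b \<and> v \<in> T F a)) \<and> A u < A v \<and>
         \<not>(\<exists>z\<in>T F a \<union> T F b. A u < A z \<and> A z < A v) \<longrightarrow>
      (u,v) \<in> zipm (2*n+2) A (first_out n F A UNIV) (first_out n F A UNIV) (Some a) (Some b)"
proof -
  have ra: "(r,a) \<in> F" "(r,b) \<in> F" using ch by blast+
  have V: "a \<in> {1..n}" "b \<in> {1..n}" "r \<in> {1..n}" using fo_arc[OF fo ra(1)] fo_arc[OF fo ra(2)] by auto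
  show oda: "od F a" using od_nonroot[OF nro ra(1)] .
  have odb: "od F b" using od_nonroot[OF nro ra(2)] .
  have noreach: "(x,y) \<notin> F\<^sup>*" if "(r,x) \<in> F" "(r,y) \<in> F" "x \<noteq> y" for x y
  proof
    assume "(x,y) \<in> F\<^sup>*"
    then show False
    proof (cases rule: rtranclE)
      case base then show ?thesis using that by simp
    next
      case (step c)
      then have "c = r" using fo_par[OF fo _ that(2)] by blast
      then have "(x,r) \<in> F\<^sup>*" using step by simp
      then show False using fo_mono[OF fo, of x r] fo_arc[OF fo that(1)] by auto
    qed
  qed
  show dis: "T F a \<inter> T F b = {}"
  proof (rule ccontr)
    assume "T F a \<inter> T F b \<noteq> {}"
    then obtain v where "(a,v) \<in> F\<^sup>*" "(b,v) \<in> F\<^sup>*" unfolding T_def by blast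
    then have "(a,b) \<in> F\<^sup>* \<or> (b,a) \<in> F\<^sup>*" using fo_inlin[OF fo] by blast
    then show False using noreach[OF ra(1,2) ab] noreach[OF ra(2,1)] ab by auto
  qed
  show "T F r = insert r (T F a \<union> T F b)"
  proof
    show "T F r \<subseteq> insert r (T F a \<union> T F b)"
    proof
      fix v assume "v \<in> T F r"
      then have "(r,v) \<in> F\<^sup>*" unfolding T_def by simp
      then show "v \<in> insert r (T F a \<union> T F b)"
      proof (cases rule: converse_rtranclE)
        case base then show ?thesis by simp
      next
        case (step c)
        then have "c \<in> {a,b}" using ch by blast
        then show ?thesis using step unfolding T_def by auto
      qed
    qed
    show "insert r (T F a \<union> T F b) \<subseteq> T F r"
    proof
      fix v assume "v \<in> insert r (T F a \<union> T F b)"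
      then consider "v = r" | "(a,v) \<in> F\<^sup>*" | "(b,v) \<in> F\<^sup>*" unfolding T_def by blast
      then show "v \<in> T F r"
      proof cases
        case 1 then show ?thesis by (simp add: T_def)
      next
        case 2 then show ?thesis using converse_rtrancl_into_rtrancl[OF ra(1)] by (simp add: T_def)
      next
        case 3 then show ?thesis using converse_rtrancl_into_rtrancl[OF ra(2)] by (simp add: T_def)
      qed
    qed
  qed
  note ba = blk_props[OF inj fo V(1)] and bb = blk_props[OF inj fo V(2)]
  note na = chain_nx[OF inj fo V(1) oda] and nb = chain_nx[OF inj fo V(2) odb]
  have la: "length (blk A F a) \<le> n"
    by (rule len_le_n[OF sw_distinct[OF ba(2)]]) (use T_sub[OF fo V(1)] ba(1) in simp)
  have lb: "length (blk A F b) \<le> n"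
    by (rule len_le_n[OF sw_distinct[OF bb(2)]]) (use T_sub[OF fo V(2)] bb(1) in simp)
  have len: "length (blk A F a) + length (blk A F b) \<le> 2 * n + 2" using la lb by simp
  have injab: "inj_on A (set (blk A F a) \<union> set (blk A F b))"
    by (rule inj_on_subset[OF inj]) (use T_sub[OF fo V(1)] T_sub[OF fo V(2)] ba(1) bb(1) in simp)
  have zl: "zipm (2*n+2) A (first_out n F A UNIV) (first_out n F A UNIV) (Some (hd (blk A F a))) (Some (hd (blk A F b))) \<subseteq>
            {(u,v). u \<in> set (blk A F a) \<union> set (blk A F b) \<and> v \<in> set (blk A F a) \<union> set (blk A F b) \<and> A u < A v}
   \<and> (\<forall>u v. ((u \<in> set (blk A F a) \<and> v \<in> set (blk A F b)) \<or> (u \<in> set (blk A F b) \<and> v \<in> set (blk A F a))) \<and> A u < A v \<and>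
         \<not>(\<exists>z\<in>set (blk A F a) \<union> set (blk A F b). A u < A z \<and> A z < A v)
        \<longrightarrow> (u,v) \<in> zipm (2*n+2) A (first_out n F A UNIV) (first_out n F A UNIV) (Some (hd (blk A F a))) (Some (hd (blk A F b))))"
    by (rule zipm_lem) (use ba bb dis injab na nb len in auto)
  then show "zipm (2*n+2) A (first_out n F A UNIV) (first_out n F A UNIV) (Some a) (Some b) \<subseteq>
            {(u,v). u \<in> T F a \<union> T F b \<and> v \<in> T F a \<union> T F b \<and> A u < A v}"
    "\<forall>u v. ((u \<in> T F a \<and> v \<in> T F b) \<or> (u \<in> T F b \<and> v \<in> T F a)) \<and> A u < A v \<and>
         \<not>(\<exists>z\<in>T F a \<union> T F b. A u < A z \<and> A z < A v) \<longrightarrow>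
      (u,v) \<in> zipm (2*n+2) A (first_out n F A UNIV) (first_out n F A UNIV) (Some a) (Some b)"
    unfolding ba(1,4) bb(1,4) by blast+
qed

lemma Z_in_merge:
  assumes "r \<in> roots n F" "a \<noteq> b" "{w. (r,w) \<in> F} = {a,b}"
  shows "zipm (2*n+2) A (first_out n F A UNIV) (first_out n F A UNIV) (Some a) (Some b) \<subseteq> merge_subtrees n A F"
  unfolding merge_subtrees_def using assms by blast

lemma tree_consec:
  fixes A :: "nat \<Rightarrow> real"
  assumes inj: "inj_on A {1..n}" and fo: "forest_ok n A F"
    and nro: "\<forall>u v c1 c2. (u,v) \<in> F \<longrightarrow> (v,c1) \<in> F \<longrightarrow> (v,c2) \<in> F \<longrightarrow> c1 = c2"
    and r: "r \<in> roots n F" and ab: "a \<noteq> b" and ch: "{w. (r,w) \<in> F} = {a,b}"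
    and x: "x \<in> T F a" and y: "y \<in> T F r" and lt: "A x < A y"
    and nbt: "\<not>(\<exists>z\<in>T F r. A x < A z \<and> A z < A y)"
  shows "(x,y) \<in> merge_subtrees n A F"
proof -
  note br = branch[OF inj fo nro r ab ch]
  have ra: "(r,a) \<in> F" using ch by blast
  have "A r < A a" using fo_arc[OF fo ra] by simp
  moreover have "A a \<le> A x" using T_min[OF fo x] .
  ultimately have "y \<noteq> r" using lt by auto
  then have "y \<in> T F a \<or> y \<in> T F b" using y br(2) by auto
  then show ?thesis
  proof
    assume ya: "y \<in> T F a"
    have "(x,y) \<in> F"
      by (rule fo_chain[OF fo inj br(3)[unfolded od_def]]) (use x ya lt nbt br(2) in \<open>auto simp: T_def\<close>)
    then show ?thesis unfolding merge_subtrees_def by blast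
  next
    assume yb: "y \<in> T F b"
    have "(x,y) \<in> zipm (2*n+2) A (first_out n F A UNIV) (first_out n F A UNIV) (Some a) (Some b)"
      using br(5) x yb lt nbt br(2) by blast
    then show ?thesis using Z_in_merge[OF r ab ch] by blast
  qed
qed

lemma init_good:
  fixes A :: "nat \<Rightarrow> real"
  assumes inj: "inj_on A {1..n}" and fo: "forest_ok n A F"
    and nro: "\<forall>u v c1 c2. (u,v) \<in> F \<longrightarrow> (v,c1) \<in> F \<longrightarrow> (v,c2) \<in> F \<longrightarrow> c1 = c2"
    and rt: "\<And>r. (\<forall>c1 c2. (r,c1) \<in> F \<longrightarrow> (r,c2) \<in> F \<longrightarrow> c1 = c2) \<or> (\<exists>a b. a \<noteq> b \<and> {w. (r,w) \<in> F} = {a,b})"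
    and dR: "distinct R0" and sR: "set R0 = roots n F"
  shows "wfb n A (map (blk A F) R0) \<and> good A (merge_subtrees n A F) (map (blk A F) R0) \<and>
    map hd (map (blk A F) R0) = R0"
proof (intro conjI)
  have rV: "r \<in> {1..n}" if "r \<in> set R0" for r using that sR unfolding roots_def by auto
  note bp = blk_props[OF inj fo rV]
  have "map (\<lambda>r. hd (blk A F r)) R0 = R0" by (rule map_idI) (use bp(4) in simp)
  then show "map hd (map (blk A F) R0) = R0" by (simp add: o_def)
  show "wfb n A (map (blk A F) R0)" unfolding wfb_def
  proof (intro conjI)
    show "\<forall>L\<in>set (map (blk A F) R0). L \<noteq> [] \<and> sorted_wrt (\<lambda>x y. A x < A y) L" using bp by auto
    have inb: "inj_on (blk A F) (set R0)" using bp(4) by (metis inj_onI)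
    have ne: "[] \<notin> set (map (blk A F) R0)" using bp(3) by (auto simp: eq_commute[of "[]"])
    show "distinct (concat (map (blk A F) R0))" unfolding distinct_concat_iff
    proof (intro conjI allI impI)
      show "distinct (removeAll [] (map (blk A F) R0))" using ne inb dR
        by (simp add: removeAll_id distinct_map)
      fix ys assume "ys \<in> set (map (blk A F) R0)"
      then show "distinct ys" using bp(2) sw_distinct by auto
    next
      fix ys zs assume h: "ys \<in> set (map (blk A F) R0) \<and> zs \<in> set (map (blk A F) R0) \<and> ys \<noteq> zs"
      then obtain r1 r2 where r: "r1 \<in> set R0" "r2 \<in> set R0" "ys = blk A F r1" "zs = blk A F r2" by auto
      then have "r1 \<noteq> r2" using h by auto
      show "set ys \<inter> set zs = {}"
      proof (rule ccontr)
        assume "set ys \<inter> set zs \<noteq> {}"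
        then obtain v where "(r1,v) \<in> F\<^sup>*" "(r2,v) \<in> F\<^sup>*" using r bp(1) unfolding T_def by auto
        then have "r1 = r2" using fo_root_unique[OF fo] r(1,2) sR by blast
        then show False using \<open>r1 \<noteq> r2\<close> by simp
      qed
    qed
    show "set (concat (map (blk A F) R0)) = {1..n}"
    proof
      show "set (concat (map (blk A F) R0)) \<subseteq> {1..n}" using bp(1) T_sub[OF fo rV] by auto
      show "{1..n} \<subseteq> set (concat (map (blk A F) R0))"
      proof
        fix v assume "v \<in> {1..n}"
        then obtain r where "r \<in> roots n F" "(r,v) \<in> F\<^sup>*" using fo_cover[OF fo] by blast
        then show "v \<in> set (concat (map (blk A F) R0))" using sR bp(1) unfolding T_def by auto
      qed
    qed
  qed
  show "good A (merge_subtrees n A F) (map (blk A F) R0)" unfolding good_def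
  proof (intro conjI ballI)
    fix p assume p: "p \<in> merge_subtrees n A F"
    obtain u w where uw: "p = (u,w)" by fastforce
    have "\<exists>r\<in>set R0. u \<in> T F r \<and> w \<in> T F r \<and> A u < A w"
    proof (cases "(u,w) \<in> F")
      case True
      then have "u \<in> {1..n}" "A u < A w" using fo_arc[OF fo] by auto
      then obtain r where "r \<in> roots n F" "(r,u) \<in> F\<^sup>*" using fo_cover[OF fo] by blast
      then show ?thesis using True sR \<open>A u < A w\<close> unfolding T_def by (auto intro: rtrancl_into_rtrancl)
    next
      case False
      then obtain r a b where rab: "r \<in> roots n F" "a \<noteq> b" "{w. (r,w) \<in> F} = {a,b}"
        "(u,w) \<in> zipm (2*n+2) A (first_out n F A UNIV) (first_out n F A UNIV) (Some a) (Some b)"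
        using p uw unfolding merge_subtrees_def by blast
      note br = branch[OF inj fo nro rab(1-3)]
      have "u \<in> T F r" "w \<in> T F r" "A u < A w" using br(2,4) rab(4) by auto
      then show ?thesis using rab(1) sR by blast
    qed
    then show "case p of (u, w) \<Rightarrow> \<exists>L\<in>set (map (blk A F) R0). u \<in> set L \<and> w \<in> set L \<and> A u < A w"
      using uw bp(1) by auto
  next
    fix L assume "L \<in> set (map (blk A F) R0)"
    then obtain r where r: "r \<in> set R0" "L = blk A F r" by auto
    have rr: "r \<in> roots n F" using r sR by simp
    show "set (zip L (tl L)) \<subseteq> merge_subtrees n A F"
    proof
      fix p assume p: "p \<in> set (zip L (tl L))"
      obtain x y where xy: "p = (x,y)" by fastforce
      have c: "x \<in> T F r" "y \<in> T F r" "A x < A y" "\<not>(\<exists>z\<in>T F r. A x < A z \<and> A z < A y)"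
        using consec[OF bp(2)[OF r(1)], of x y] p xy r bp(1)[OF r(1)] by auto
      have "(x,y) \<in> merge_subtrees n A F"
      proof (cases "\<forall>c1 c2. (r,c1) \<in> F \<longrightarrow> (r,c2) \<in> F \<longrightarrow> c1 = c2")
        case True
        have "od F r" unfolding od_def
        proof (intro allI impI)
          fix w c1 c2 assume h: "(r,w) \<in> F\<^sup>*" "(w,c1) \<in> F" "(w,c2) \<in> F"
          from h(1) show "c1 = c2"
          proof (cases rule: rtranclE)
            case base then show ?thesis using True h by simp
          next
            case (step p) then show ?thesis using nro h by blast
          qed
        qed
        then have "(x,y) \<in> F"
          by (intro fo_chain[OF fo inj, of r]) (use c in \<open>auto simp: od_def T_def\<close>)
        then show ?thesis unfolding merge_subtrees_def by blast
      next
        case False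
        then obtain a b where ab: "a \<noteq> b" "{w. (r,w) \<in> F} = {a,b}" using rt[of r] by blast
        have ab': "b \<noteq> a" "{w. (r,w) \<in> F} = {b,a}" using ab by auto
        note br = branch[OF inj fo nro rr ab]
        have "x = r \<or> x \<in> T F a \<or> x \<in> T F b" using c(1) br(2) by auto
        then show ?thesis
        proof (elim disjE)
          assume xr: "x = r"
          have yr: "y \<noteq> r" using c(3) xr by auto
          have ra: "(r,a) \<in> F" "(r,b) \<in> F" using ab by blast+
          have aT: "a \<in> T F r" "b \<in> T F r" using br(2) by (auto simp: T_def)
          have "y \<in> T F a \<or> y \<in> T F b" using c(2) br(2) yr by auto
          then have "y = a \<or> y = b"
          proof
            assume ya: "y \<in> T F a"
            have "A a \<le> A y" using T_min[OF fo ya] .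
            moreover have "A r < A a" using fo_arc[OF fo ra(1)] by simp
            moreover have "a \<in> {1..n}" "y \<in> {1..n}" using fo_arc[OF fo ra(1)] T_sub[OF fo rV[OF r(1)]] c(2) by auto
            ultimately have "A a = A y" using c(4) aT(1) xr by force
            then have "a = y" using inj \<open>a \<in> {1..n}\<close> \<open>y \<in> {1..n}\<close> by (meson inj_onD)
            then show ?thesis by simp
          next
            assume yb: "y \<in> T F b"
            have "A b \<le> A y" using T_min[OF fo yb] .
            moreover have "A r < A b" using fo_arc[OF fo ra(2)] by simp
            moreover have "b \<in> {1..n}" "y \<in> {1..n}" using fo_arc[OF fo ra(2)] T_sub[OF fo rV[OF r(1)]] c(2) by auto
            ultimately have "A b = A y" using c(4) aT(2) xr by force
            then have "b = y" using inj \<open>b \<in> {1..n}\<close> \<open>y \<in> {1..n}\<close> by (meson inj_onD)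
            then show ?thesis by simp
          qed
          then have "(x,y) \<in> F" using ra xr by auto
          then show ?thesis unfolding merge_subtrees_def by blast
        next
          assume "x \<in> T F a"
          then show ?thesis using tree_consec[OF inj fo nro rr ab _ c(2-4)] by blast
        next
          assume "x \<in> T F b"
          then show ?thesis using tree_consec[OF inj fo nro rr ab' _ c(2-4)] by blast
        qed
      qed
      then show "p \<in> merge_subtrees n A F" using xy by simp
    qed
  qed
qed

theorem theorem11:
  fixes n :: nat and A :: "nat \<Rightarrow> real" and vl R0 :: "nat list" and F H' :: graph
  assumes "inj_on A {1..n}"
    and "distinct vl" and "set vl = {1..n}"
    and "F = dfs_forest n (corr_graph n 1 A) A vl"
    and "H' = merge_subtrees n A F"
    and "distinct R0" and "set R0 = roots n F"
  shows "\<exists>i\<ge>1. is_ham_path_graph n (fst ((round_step n A ^^ i) (H', R0))) \<and>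
           (\<forall>ord. is_topsort n (fst ((round_step n A ^^ i) (H', R0))) ord
                    \<longleftrightarrow> is_sorted_indices n A ord)"
proof -
  note inj = assms(1)
  have fo: "forest_ok n A F" using F_ok assms(4) by simp
  note nro = F_nonroot[OF assms(4)]
  note rt = F_root[OF assms(4)]
  define Ls0 where "Ls0 = map (blk A F) R0"
  have ig: "wfb n A Ls0" "good A H' Ls0" "map hd Ls0 = R0"
    using init_good[OF inj fo nro rt assms(6,7)] assms(5) unfolding Ls0_def by auto
  define i where "i = length Ls0"
  define Ms where "Ms = (pm A ^^ Suc i) Ls0"
  have it: "(round_step n A ^^ Suc i) (H', R0) = (chains Ms, map hd Ms)" "wfb n A Ms"
    using iter_lem[OF inj ig(1,2), of i] ig(3) unfolding Ms_def by auto
  have "length Ms \<le> 1" using len_iter[where A=A and i="Suc i" and Ls=Ls0] unfolding Ms_def i_def by auto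
  then obtain L where L: "chains Ms = set (zip L (tl L))" "sorted_wrt (\<lambda>x y. A x < A y) L" "set L = {1..n}"
  proof (cases Ms)
    case Nil
    then have "{1..n} = ({}::nat set)" using it(2) unfolding wfb_def by simp
    then show ?thesis using that[of "[]"] Nil by (simp add: chains_def)
  next
    case (Cons M rest)
    then have "rest = []" using \<open>length Ms \<le> 1\<close> by simp
    then show ?thesis using that[of M] Cons it(2) unfolding wfb_def chains_def by simp
  qed
  have "is_ham_path_graph n (fst ((round_step n A ^^ Suc i) (H', R0))) \<and>
           (\<forall>ord. is_topsort n (fst ((round_step n A ^^ Suc i) (H', R0))) ord
                    \<longleftrightarrow> is_sorted_indices n A ord)"
    using final_lem[OF inj L(2,3)] it(1) L(1) by simp
  then show ?thesis by (intro exI[of _ "Suc i"]) simp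
qed


end
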